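(* Let $\mathcal{V}$ be a finely representable action of $\Gamma^+$ on a unital C$^*$-algebra $\mathcal{A}$. Then there exists a unique action $\mathcal{H}$ of $\Gamma^+$ on $\mathcal{A}$ such that $(\mathcal{V},\mathcal{H})$ is a complete interaction. Moreover, for every covariant representation $(C,\sigma,U)$ of $\mathcal{V}$, $$\sigma(\mathcal{V}_x(a))=U_x\sigma(a)U_x^*,\qquad \sigma(\mathcal{H}_x(a))=U_x^*\sigma(a)U_x,\qquad a\in\mathcal{A},\ x\in\Gamma^+.$$
   Context: $\Gamma$ is a totally ordered abelian group with identity $0$ and $\Gamma^+=\{x\in\Gamma:0\le x\}$. An action of $\Gamma^+$ on $\mathcal{A}$ is a map $x\mapsto\mathcal{V}_x$ from $\Gamma^+$ into the bounded positive linear maps $\mathcal{A}\to\mathcal{A}$ with $\mathcal{V}_0=\mathrm{Id}$ and $\mathcal{V}_x\circ\mathcal{V}_y=\mathcal{V}_{x+y}$. A covariant representation of $\mathcal{V}$ is a triple $(C,\sigma,U)$ where $C$ is a unital C$^*$-algebra, $\sigma:\mathcal{A}\to C$ is a unital injective $*$-homomorphism, and $U:\Gamma^+\to C$, $x\mapsto U_x$, is a semigroup homomorphism (into the multiplicative semigroup of $C$) such that each $U_x$ is a partial isometry and $\sigma(\mathcal{V}_x(a))=U_x\sigma(a)U_x^*$ and $U_x^*\sigma(a)U_x\in\sigma(\mathcal{A})$ for all $a\in\mathcal{A}$, $x\in\Gamma^+$. The action $\mathcal{V}$ is finely representable if it admits a covariant representation. An interaction is a pair $(\mathcal{V},\mathcal{H})$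 of actions such that for every $x\in\Gamma^+$: (i) $\mathcal{V}_x\mathcal{H}_x\mathcal{V}_x=\mathcal{V}_x$; (ii) $\mathcal{H}_x\mathcal{V}_x\mathcal{H}_x=\mathcal{H}_x$; (iii) $\mathcal{V}_x(ab)=\mathcal{V}_x(a)\mathcal{V}_x(b)$ whenever $a$ or $b$ belongs to $\mathcal{H}_x(\mathcal{A})$; (iv) $\mathcal{H}_x(ab)=\mathcal{H}_x(a)\mathcal{H}_x(b)$ whenever $a$ or $b$ belongs to $\mathcal{V}_x(\mathcal{A})$. It is complete if moreover $\mathcal{H}_x(\mathcal{V}_x(a))=\mathcal{H}_x(1)a\mathcal{H}_x(1)$ and $\mathcal{V}_x(\mathcal{H}_x(a))=\mathcal{V}_x(1)a\mathcal{V}_x(1)$ for all $x\in\Gamma^+$, $a\in\mathcal{A}$, and $\mathcal{H}_y(1)\mathcal{V}_x(1)=\mathcal{V}_x(1)\mathcal{H}_y(1)$ for all $x,y\in\Gamma^+$. *)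

theory Defs
  imports Complex_Main
begin

class cstar_algebra = real_normed_algebra_1 + banach +
  fixes scaleC :: "complex \<Rightarrow> 'a \<Rightarrow> 'a"
    and adj :: "'a \<Rightarrow> 'a"
  assumes scaleC_add_right: "scaleC c (x + y) = scaleC c x + scaleC c y"
    and scaleC_add_left: "scaleC (b + c) x = scaleC b x + scaleC c x"
    and scaleC_scaleC: "scaleC b (scaleC c x) = scaleC (b * c) x"
    and scaleC_one: "scaleC 1 x = x"
    and scaleR_scaleC: "scaleR r x = scaleC (complex_of_real r) x"
    and norm_scaleC: "norm (scaleC c x) = cmod c * norm x"
    and mult_scaleC_left: "scaleC c x * y = scaleC c (x * y)"
    and mult_scaleC_right: "x * scaleC c y = scaleC c (x * y)"
    and adj_adj: "adj (adj x) = x"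
    and adj_add: "adj (x + y) = adj x + adj y"
    and adj_mult: "adj (x * y) = adj y * adj x"
    and adj_scaleC: "adj (scaleC c x) = scaleC (cnj c) (adj x)"
    and cstar_identity: "norm (adj x * x) = norm x * norm x"

definition invertible_el :: "'a::cstar_algebra \<Rightarrow> bool" where
  "invertible_el a \<longleftrightarrow> (\<exists>b. a * b = 1 \<and> b * a = 1)"

definition spectrum_el :: "'a::cstar_algebra \<Rightarrow> complex set" where
  "spectrum_el a = {z. \<not> invertible_el (a - scaleC z 1)}"

definition positive_el :: "'a::cstar_algebra \<Rightarrow> bool" where
  "positive_el a \<longleftrightarrow> adj a = a \<and> (\<forall>z\<in>spectrum_el a. z \<in> \<real> \<and> 0 \<le> Re z)"

definition clinear_map :: "('a::cstar_algebra \<Rightarrow> 'b::cstar_algebra) \<Rightarrow> bool" where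
  "clinear_map f \<longleftrightarrow> (\<forall>x y. f (x + y) = f x + f y) \<and> (\<forall>c x. f (scaleC c x) = scaleC c (f x))"

definition bounded_map :: "('a::cstar_algebra \<Rightarrow> 'b::cstar_algebra) \<Rightarrow> bool" where
  "bounded_map f \<longleftrightarrow> (\<exists>K. \<forall>x. norm (f x) \<le> K * norm x)"

definition bounded_positive_linear :: "('a::cstar_algebra \<Rightarrow> 'a) \<Rightarrow> bool" where
  "bounded_positive_linear f \<longleftrightarrow> clinear_map f \<and> bounded_map f \<and>
     (\<forall>a. positive_el a \<longrightarrow> positive_el (f a))"

definition projection_el :: "'a::cstar_algebra \<Rightarrow> bool" where
  "projection_el p \<longleftrightarrow> p * p = p \<and> adj p = p"

definition partial_isometry :: "'a::cstar_algebra \<Rightarrow> bool" where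
  "partial_isometry u \<longleftrightarrow> projection_el (adj u * u)"

text \<open>Only the values at x >= 0 are meaningful.\<close>
definition action :: "('g::linordered_ab_group_add \<Rightarrow> 'a::cstar_algebra \<Rightarrow> 'a) \<Rightarrow> bool" where
  "action V \<longleftrightarrow> (\<forall>x\<ge>0. bounded_positive_linear (V x)) \<and> V 0 = id \<and>
     (\<forall>x\<ge>0. \<forall>y\<ge>0. V x \<circ> V y = V (x + y))"

definition unital_injective_star_hom :: "('a::cstar_algebra \<Rightarrow> 'c::cstar_algebra) \<Rightarrow> bool" where
  "unital_injective_star_hom \<sigma> \<longleftrightarrow> clinear_map \<sigma> \<and> (\<forall>a b. \<sigma> (a * b) = \<sigma> a * \<sigma> b) \<and>
     (\<forall>a. \<sigma> (adj a) = adj (\<sigma> a)) \<and> \<sigma> 1 = 1 \<and> inj \<sigma>"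

definition covariant_rep ::
  "('a::cstar_algebra \<Rightarrow> 'c::cstar_algebra) \<Rightarrow> ('g::linordered_ab_group_add \<Rightarrow> 'c) \<Rightarrow> ('g \<Rightarrow> 'a \<Rightarrow> 'a) \<Rightarrow> bool" where
  "covariant_rep \<sigma> U V \<longleftrightarrow> unital_injective_star_hom \<sigma> \<and>
     (\<forall>x\<ge>0. \<forall>y\<ge>0. U (x + y) = U x * U y) \<and>
     (\<forall>x\<ge>0. partial_isometry (U x)) \<and>
     (\<forall>x\<ge>0. \<forall>a. \<sigma> (V x a) = U x * \<sigma> a * adj (U x) \<and> adj (U x) * \<sigma> a * U x \<in> range \<sigma>)"

definition interaction :: "('g::linordered_ab_group_add \<Rightarrow> 'a::cstar_algebra \<Rightarrow> 'a) \<Rightarrow> ('g \<Rightarrow> 'a \<Rightarrow> 'a) \<Rightarrow> bool" where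
  "interaction V H \<longleftrightarrow> action V \<and> action H \<and> (\<forall>x\<ge>0.
     V x \<circ> H x \<circ> V x = V x \<and> H x \<circ> V x \<circ> H x = H x \<and>
     (\<forall>a b. a \<in> range (H x) \<or> b \<in> range (H x) \<longrightarrow> V x (a * b) = V x a * V x b) \<and>
     (\<forall>a b. a \<in> range (V x) \<or> b \<in> range (V x) \<longrightarrow> H x (a * b) = H x a * H x b))"

definition complete_interaction :: "('g::linordered_ab_group_add \<Rightarrow> 'a::cstar_algebra \<Rightarrow> 'a) \<Rightarrow> ('g \<Rightarrow> 'a \<Rightarrow> 'a) \<Rightarrow> bool" where
  "complete_interaction V H \<longleftrightarrow> interaction V H \<and>
     (\<forall>x\<ge>0. \<forall>a. H x (V x a) = H x 1 * a * H x 1 \<and> V x (H x a) = V x 1 * a * V x 1) \<and>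
     (\<forall>x\<ge>0. \<forall>y\<ge>0. H y 1 * V x 1 = V x 1 * H y 1)"

end

theory Submission
  imports Defs "HOL-Analysis.Analysis"
begin

section \<open>Basic algebra in C*-algebras\<close>

definition cs :: "complex \<Rightarrow> 'a::cstar_algebra" where "cs c = scaleC c 1"

lemma scaleC_cs: "scaleC c x = cs c * (x::'a::cstar_algebra)"
  by (simp add: cs_def mult_scaleC_left)

lemma scaleC_cs': "scaleC c x = (x::'a::cstar_algebra) * cs c"
  by (simp add: cs_def mult_scaleC_right)

lemma cs_comm: "cs c * (x::'a::cstar_algebra) = x * cs c"
  by (metis scaleC_cs scaleC_cs')

lemma cs_add: "cs (a + b) = (cs a + cs b :: 'a::cstar_algebra)"
  by (simp add: cs_def scaleC_add_left)

lemma cs_mult: "cs (a * b) = (cs a * cs b :: 'a::cstar_algebra)"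
  by (metis cs_def scaleC_cs scaleC_scaleC)

lemma cs_one[simp]: "cs 1 = (1::'a::cstar_algebra)"
  by (simp add: cs_def scaleC_one)

lemma cs_zero[simp]: "cs 0 = (0::'a::cstar_algebra)"
proof -
  have "cs 0 = (cs 0 + cs 0 :: 'a)" using cs_add[of 0 0] by simp
  thus ?thesis by simp
qed

lemma cs_minus: "cs (- a) = (- cs a :: 'a::cstar_algebra)"
proof -
  have "cs a + cs (-a) = (0::'a)" using cs_add[of a "-a"] by simp
  thus ?thesis by (rule minus_unique[symmetric])
qed

lemma cs_diff: "cs (a - b) = (cs a - cs b :: 'a::cstar_algebra)"
proof -
  have "cs (a + -b) = (cs a + - cs b :: 'a)" by (simp only: cs_add cs_minus)
  thus ?thesis by simp
qed

lemma cs_of_real: "cs (complex_of_real r) = (of_real r :: 'a::cstar_algebra)"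
  by (simp add: cs_def of_real_def scaleR_scaleC)

lemma norm_cs_mult: "norm (cs c * (x::'a::cstar_algebra)) = cmod c * norm x"
  by (metis norm_scaleC scaleC_cs)

lemma norm_cs: "norm (cs c :: 'a::cstar_algebra) = cmod c"
  using norm_cs_mult[of c "1::'a"] by simp

lemma cs_power: "cs (c ^ n) = (cs c ^ n :: 'a::cstar_algebra)"
  by (induct n) (simp_all add: cs_mult)

lemma cs_sum: "cs (sum f A) = (sum (\<lambda>i. cs (f i)) A :: 'a::cstar_algebra)"
  by (induct A rule: infinite_finite_induct) (simp_all add: cs_add)

lemma cs_of_nat: "cs (of_nat n) = (of_nat n :: 'a::cstar_algebra)"
  by (induct n) (simp_all add: cs_add)

lemma cs_inv: "c \<noteq> 0 \<Longrightarrow> cs c * cs (inverse c) = (1::'a::cstar_algebra)"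
  by (simp flip: cs_mult)

lemma cs_inv': "c \<noteq> 0 \<Longrightarrow> cs (inverse c) * cs c = (1::'a::cstar_algebra)"
  by (simp flip: cs_mult)

lemma mult_cs_assoc: "x * (cs c * y) = cs c * (x * (y::'a::cstar_algebra))"
  by (metis cs_comm mult.assoc)

lemma adj_zero[simp]: "adj 0 = (0::'a::cstar_algebra)"
  by (metis add_cancel_right_right adj_add)

lemma adj_minus: "adj (- x) = - adj (x::'a::cstar_algebra)"
  by (metis add.right_inverse adj_add adj_zero eq_neg_iff_add_eq_0)

lemma adj_diff: "adj (x - y) = adj x - adj (y::'a::cstar_algebra)"
  by (metis adj_add adj_minus diff_conv_add_uminus)

lemma adj_one[simp]: "adj 1 = (1::'a::cstar_algebra)"
  by (metis adj_adj adj_mult mult.right_neutral mult_1_left)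

lemma adj_cs: "adj (cs c) = (cs (cnj c) :: 'a::cstar_algebra)"
  by (simp add: cs_def adj_scaleC)

lemma adj_power: "adj (x ^ n) = adj (x::'a::cstar_algebra) ^ n"
proof (induct n)
  case (Suc n)
  have "adj (x ^ Suc n) = adj (x^n) * adj x" by (simp add: adj_mult)
  also have "\<dots> = adj x ^ Suc n" using Suc by (simp add: power_commutes)
  finally show ?case .
qed simp

lemma adj_sum: "adj (sum f A) = sum (\<lambda>i. adj (f i)) (A::'b set)"
  by (induct A rule: infinite_finite_induct) (simp_all add: adj_add)

lemma norm_sq_adj: "norm (adj x * x) = norm (x::'a::cstar_algebra) ^ 2"
  by (simp add: cstar_identity power2_eq_square)

lemma cstar_zero: "adj x * x = 0 \<Longrightarrow> x = (0::'a::cstar_algebra)"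
  by (metis cstar_identity mult_eq_0_iff norm_eq_zero)

lemma norm_adj: "norm (adj x) = norm (x::'a::cstar_algebra)"
proof -
  have le: "norm x \<le> norm (adj x)" for x :: 'a
  proof (cases "x = 0")
    case False
    have "norm x * norm x \<le> norm (adj x) * norm x"
      by (metis cstar_identity norm_mult_ineq)
    thus ?thesis using False by simp
  qed simp
  show ?thesis using le[of x] le[of "adj x"] by (simp add: adj_adj)
qed

lemma norm_adj_mult_self: "norm (x * adj x) = norm (x::'a::cstar_algebra) * norm x"
  by (metis adj_adj cstar_identity norm_adj)

lemma norm_sa_square: "adj s = s \<Longrightarrow> norm (s * s) = norm (s::'a::cstar_algebra) ^ 2"
  by (metis norm_sq_adj)

lemma norm_sa_pow2: "adj s = s \<Longrightarrow> norm (s ^ (2 ^ k)) = norm (s::'a::cstar_algebra) ^ (2 ^ k)"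
proof (induct k)
  case (Suc k)
  have sa: "adj (s ^ 2 ^ k) = s ^ 2 ^ k" using Suc by (simp add: adj_power)
  have "s ^ (2 ^ Suc k) = s ^ 2 ^ k * s ^ 2 ^ k" by (simp add: power_add[symmetric] mult_2)
  hence "norm (s ^ (2 ^ Suc k)) = norm (s ^ 2 ^ k) ^ 2" using norm_sa_square[OF sa] by simp
  also have "\<dots> = norm s ^ (2 ^ Suc k)" using Suc by (simp add: power_mult[symmetric] mult.commute)
  finally show ?case .
qed simp

lemma projection_norm: "projection_el p \<Longrightarrow> norm (p::'a::cstar_algebra) \<le> 1"
proof -
  assume "projection_el p"
  hence pp: "p * p = p" "adj p = p" by (auto simp: projection_el_def)
  have "norm p * norm p = norm p" by (metis cstar_identity pp)
  thus ?thesis by (metis mult_cancel_right1 norm_eq_zero norm_one order_refl zero_less_one_class.zero_le_one)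
qed

lemma projection_compl: "projection_el p \<Longrightarrow> projection_el (1 - (p::'a::cstar_algebra))"
  by (auto simp: projection_el_def algebra_simps adj_diff)

lemma pi_right: 
  assumes "partial_isometry (u::'a::cstar_algebra)"
  shows "u * (adj u * u) = u"
proof -
  let ?P = "adj u * u"
  have P: "?P * ?P = ?P" "adj ?P = ?P" using assms by (auto simp: partial_isometry_def projection_el_def)
  let ?d = "u - u * ?P"
  have "adj ?d * ?d = ?P - ?P * ?P - ?P * ?P + ?P * ?P * ?P"
    using P(2) by (simp add: adj_diff adj_mult algebra_simps)
  also have "\<dots> = 0" using P(1) by (simp add: mult.assoc)
  finally have "?d = 0" by (rule cstar_zero)
  thus ?thesis by simp
qed

lemma pi_left:
  assumes "partial_isometry (u::'a::cstar_algebra)"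
  shows "(u * adj u) * u = u"
  using pi_right[OF assms] by (simp add: mult.assoc)

lemma pi_adj_left:
  assumes "partial_isometry (u::'a::cstar_algebra)"
  shows "adj u * (u * adj u) = adj u"
  by (metis adj_adj adj_mult assms mult.assoc pi_right)

lemma pi_adj_projection:
  assumes "partial_isometry (u::'a::cstar_algebra)"
  shows "projection_el (u * adj u)"
  unfolding projection_el_def
  by (metis adj_adj adj_mult assms mult.assoc pi_right)

lemma pi_projection:
  assumes "partial_isometry (u::'a::cstar_algebra)"
  shows "projection_el (adj u * u)"
  using assms by (simp add: partial_isometry_def)

lemma pi_product_commute:
  assumes a: "partial_isometry (a::'a::cstar_algebra)" and b: "partial_isometry b"
    and ab: "partial_isometry (a * b)"
  shows "(adj a * a) * (b * adj b) = (b * adj b) * (adj a * a)"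
proof -
  define e where "e = adj a * a"
  define f where "f = b * adj b"
  have e: "e * e = e" "adj e = e" using pi_projection[OF a] by (auto simp: e_def projection_el_def)
  have f: "f * f = f" "adj f = f" using pi_adj_projection[OF b] by (auto simp: f_def projection_el_def)
  have e3: "e * (e * x) = e * x" for x by (metis e(1) mult.assoc)
  have f3: "f * (f * x) = f * x" for x by (metis f(1) mult.assoc)
  define c where "c = e * b"
  have "adj c * c = adj b * e * b" using e e3 by (simp add: c_def adj_mult mult.assoc)
  also have "\<dots> = adj (a * b) * (a * b)" by (simp add: e_def adj_mult mult.assoc)
  finally have cc: "projection_el (adj c * c)" using ab by (simp add: partial_isometry_def)
  hence "partial_isometry c" by (simp add: partial_isometry_def)
  hence "projection_el (c * adj c)" by (rule pi_adj_projection)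
  moreover have "c * adj c = e * f * e" using e by (simp add: c_def f_def adj_mult mult.assoc)
  ultimately have efe: "(e * f * e) * (e * f * e) = e * f * e" by (simp add: projection_el_def)
  hence efe': "e * (f * (e * (f * e))) = e * (f * e)" using e e3 by (simp add: mult.assoc)
  define w where "w = f * e - e * f * e"
  have "adj w * w = (e * f - e * f * e) * (f * e - e * f * e)"
    using e f by (simp add: w_def adj_diff adj_mult mult.assoc)
  also have "\<dots> = 0" using efe' e e3 f f3 by (simp add: algebra_simps)
  finally have "w = 0" by (rule cstar_zero)
  hence fe: "f * e = e * f * e" by (simp add: w_def)
  hence "adj (f * e) = adj (e * f * e)" by simp
  hence "e * f = e * f * e" using e f by (simp add: adj_mult mult.assoc)
  with fe show ?thesis by (simp add: e_def f_def)
qed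

lemma invertible_elI: "a * b = 1 \<Longrightarrow> b * a = 1 \<Longrightarrow> invertible_el (a::'a::cstar_algebra)"
  unfolding invertible_el_def by blast

lemma inv_one: "invertible_el (1::'a::cstar_algebra)"
  by (rule invertible_elI[of 1 1]) simp_all

lemma inv_mult:
  assumes "invertible_el (a::'a::cstar_algebra)" "invertible_el b"
  shows "invertible_el (a * b)"
proof -
  obtain a' where a: "a * a' = 1" "a' * a = 1" using assms(1) by (auto simp: invertible_el_def)
  obtain b' where b: "b * b' = 1" "b' * b = 1" using assms(2) by (auto simp: invertible_el_def)
  have "(a * b) * (b' * a') = a * (b * b') * a'" by (simp add: mult.assoc)
  hence "(a * b) * (b' * a') = 1" using a b by simp
  moreover have "(b' * a') * (a * b) = b' * (a' * a) * b" by (simp add: mult.assoc)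
  hence "(b' * a') * (a * b) = 1" using a b by simp
  ultimately show ?thesis by (rule invertible_elI)
qed

lemma inv_cs: "c \<noteq> 0 \<Longrightarrow> invertible_el (cs c :: 'a::cstar_algebra)"
  by (rule invertible_elI[of _ "cs (inverse c)"]) (simp_all add: cs_inv cs_inv')

lemma inv_minus: "invertible_el (a::'a::cstar_algebra) \<Longrightarrow> invertible_el (- a)"
  unfolding invertible_el_def by (metis minus_mult_minus)

lemma spectrum_cs: "z \<in> spectrum_el a \<longleftrightarrow> \<not> invertible_el (a - cs z)"
  by (simp add: spectrum_el_def cs_def)

lemma geom_ring: "1 - y ^ n = (\<Sum>k<n. y ^ k) * (1 - (y::'a::ring_1))"
proof (induct n)
  case (Suc n)
  have "1 - y ^ Suc n = (1 - y ^ n) + y ^ n * (1 - y)" by (simp add: algebra_simps power_Suc2 power_commutes)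
  also have "\<dots> = (\<Sum>k<Suc n. y ^ k) * (1 - y)" using Suc by (simp add: algebra_simps)
  finally show ?case .
qed simp

lemma cs_mult_power: "(cs w * x) ^ n = cs (w ^ n) * (x::'a::cstar_algebra) ^ n"
proof (induct n)
  case (Suc n)
  have "(cs w * x) ^ Suc n = (cs w * x) * (cs (w ^ n) * x ^ n)" using Suc by simp
  also have "\<dots> = cs w * (x * cs (w ^ n)) * x ^ n" by (simp add: mult.assoc)
  also have "\<dots> = (cs w * cs (w ^ n)) * (x * x ^ n)" by (simp only: cs_comm[of "w ^ n" x, symmetric] mult.assoc)
  also have "\<dots> = cs (w ^ Suc n) * x ^ Suc n" by (simp add: cs_mult)
  finally show ?case .
qed simp

section \<open>Neumann series\<close>

lemma neumann:
  fixes y :: "'a::cstar_algebra"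
  assumes "norm y < 1"
  shows "invertible_el (1 - y)"
proof -
  have sm: "summable (\<lambda>n. y ^ n)"
    by (rule summable_comparison_test[where g="\<lambda>n. norm y ^ n"])
       (auto intro: norm_power_ineq summable_geometric simp: assms)
  define s where "s = suminf (\<lambda>n. y ^ n)"
  have ss: "(\<lambda>n. y ^ n) sums s" using sm by (simp add: s_def summable_sums)
  have lim: "(\<lambda>n. y ^ n) \<longlonglongrightarrow> 0" by (rule LIMSEQ_power_zero) (simp add: assms)
  have tel: "(\<lambda>n. y ^ n - y ^ Suc n) sums (y ^ 0 - 0)" by (rule telescope_sums'[OF lim])
  have "(\<lambda>n. (1 - y) * y ^ n) sums ((1 - y) * s)" by (rule sums_mult[OF ss])
  moreover have "(\<lambda>n. (1 - y) * y ^ n) = (\<lambda>n. y ^ n - y ^ Suc n)" by (simp add: algebra_simps)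
  ultimately have 1: "(1 - y) * s = 1" using tel sums_unique2 by fastforce
  have "(\<lambda>n. y ^ n * (1 - y)) sums (s * (1 - y))" by (rule sums_mult2[OF ss])
  moreover have "(\<lambda>n. y ^ n * (1 - y)) = (\<lambda>n. y ^ n - y ^ Suc n)" by (simp add: algebra_simps power_commutes)
  ultimately have 2: "s * (1 - y) = 1" using tel sums_unique2 by fastforce
  show ?thesis using 1 2 by (rule invertible_elI)
qed

lemma spec_bound:
  assumes "z \<in> spectrum_el (a::'a::cstar_algebra)"
  shows "cmod z \<le> norm a"
proof (rule ccontr)
  assume "\<not> cmod z \<le> norm a"
  hence lt: "norm a < cmod z" by simp
  hence z: "z \<noteq> 0" by auto
  have "norm (cs (inverse z) * a) = norm a / cmod z" by (simp add: norm_cs_mult norm_inverse divide_inverse mult.commute)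
  also have "\<dots> < 1" using lt z by simp
  finally have "invertible_el (1 - cs (inverse z) * a)" by (rule neumann)
  hence "invertible_el (cs (- z) * (1 - cs (inverse z) * a))" using z by (intro inv_mult inv_cs) auto
  moreover have "cs (- z) * (1 - cs (inverse z) * a) = a - cs z"
  proof -
    have m: "cs (- z) * cs (inverse z) = (-1::'a)" using z by (simp add: cs_minus flip: cs_mult)
    have "cs (- z) * (1 - cs (inverse z) * a) = cs (- z) - (cs (- z) * cs (inverse z)) * a"
      by (simp add: right_diff_distrib mult.assoc)
    also have "\<dots> = cs (- z) + a" by (simp add: m)
    also have "\<dots> = a - cs z" by (simp add: cs_minus)
    finally show ?thesis .
  qed
  ultimately show False using assms by (simp add: spectrum_cs)
qed

section \<open>Roots of unity\<close>

lemma cis_minus_1_bound: "cmod (cis t - 1) \<le> \<bar>t\<bar>"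
proof -
  have "(cmod (cis t - 1))\<^sup>2 = (cos t - 1)\<^sup>2 + (sin t)\<^sup>2"
    by (simp add: cmod_def cis.ctr)
  also have "\<dots> = 2 - 2 * cos t" using sin_cos_squared_add[of t] by (simp add: power2_diff algebra_simps)
  also have "\<dots> = 4 * (sin (t/2))\<^sup>2" using cos_double_sin[of "t/2"] by simp
  also have "\<dots> \<le> 4 * (t/2)\<^sup>2"
    using abs_le_square_iff[THEN iffD1, OF abs_sin_x_le_abs_x[of "t/2"]] by simp
  also have "\<dots> = \<bar>t\<bar>\<^sup>2" by (simp add: power2_eq_square)
  finally show ?thesis using abs_ge_zero power2_le_imp_le by blast
qed

lemma root_unity_props:
  fixes N :: nat
  assumes N: "N \<ge> 2"
  defines "\<zeta> \<equiv> cis (2 * pi / real N)"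
  shows "\<zeta> ^ N = 1" and "cmod \<zeta> = 1"
    and "\<And>k. 0 < k \<Longrightarrow> k < N \<Longrightarrow> (\<Sum>j<N. (\<zeta> ^ k) ^ j) = 0"
    and "\<zeta> \<noteq> 1"
    and "cmod (\<zeta> - 1) \<le> 2 * pi / real N"
proof -
  have "\<zeta> ^ N = cis (real N * (2 * pi / real N))" by (simp only: \<zeta>_def Complex.DeMoivre)
  also have "real N * (2 * pi / real N) = 2 * pi" using N by simp
  finally show z1: "\<zeta> ^ N = 1" by simp
  show "cmod \<zeta> = 1" by (simp add: \<zeta>_def)
  have ne: "\<zeta> ^ k \<noteq> 1" if "0 < k" "k < N" for k
  proof
    assume "\<zeta> ^ k = 1"
    hence "cis (2 * pi * real k / real N) = 1" by (simp add: \<zeta>_def Complex.DeMoivre mult_ac)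
    then obtain m :: int where m: "2 * pi * real k / real N = 2 * pi * of_int m"
      by (auto simp: complex_eq_iff cos_one_2pi_int)
    hence "real k = real N * of_int m" using N by (simp add: field_simps)
    hence "int k = int N * m" by (metis of_int_eq_iff of_int_mult of_int_of_nat_eq)
    hence "int N dvd int k" by simp
    hence "N dvd k" by simp
    with that show False by (simp add: nat_dvd_not_less)
  qed
  show "\<zeta> \<noteq> 1" using ne[of 1] N by simp
  show "(\<Sum>j<N. (\<zeta> ^ k) ^ j) = 0" if "0 < k" "k < N" for k
  proof -
    have "(\<Sum>j<N. (\<zeta> ^ k) ^ j) = ((\<zeta> ^ k) ^ N - 1) / (\<zeta> ^ k - 1)"
      using ne[OF that] by (subst geometric_sum) auto
    also have "(\<zeta> ^ k) ^ N = 1" by (metis power_mult mult.commute z1 power_one)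
    finally show ?thesis by simp
  qed
  show "cmod (\<zeta> - 1) \<le> 2 * pi / real N"
    using cis_minus_1_bound[of "2 * pi / real N"] by (simp add: \<zeta>_def)
qed

lemma norm_mult3: "norm (a * b * c) \<le> norm a * norm b * norm (c::'a::real_normed_algebra)"
  by (metis mult_right_mono norm_ge_zero norm_mult_ineq order_trans)

locale resolvent =
  fixes x :: "'a::cstar_algebra" and \<tau> :: real and K :: "complex \<Rightarrow> 'a"
  assumes K1: "cmod w \<le> \<tau> \<Longrightarrow> (1 - cs w * x) * K w = 1"
    and K2: "cmod w \<le> \<tau> \<Longrightarrow> K w * (1 - cs w * x) = 1"
begin

lemma Kx: assumes "cmod w \<le> \<tau>" shows "K w * x = x * K w"
proof -
  have "K w * x = K w * (x * ((1 - cs w * x) * K w))" using K1[OF assms] by simp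
  also have "x * ((1 - cs w * x) * K w) = ((1 - cs w * x) * x) * K w"
  proof -
    have "x * (1 - cs w * x) = (1 - cs w * x) * x"
      by (simp add: right_diff_distrib left_diff_distrib mult.assoc cs_comm[of w x, symmetric]
          flip: mult.assoc[of x "cs w" x])
    thus ?thesis by (simp add: mult.assoc[symmetric])
  qed
  also have "K w * (((1 - cs w * x) * x) * K w) = (K w * (1 - cs w * x)) * (x * K w)"
    by (simp add: mult.assoc)
  also have "\<dots> = x * K w" using K2[OF assms] by simp
  finally show ?thesis .
qed

lemma K0: "\<tau> \<ge> 0 \<Longrightarrow> K 0 = 1"
  using K1[of 0] by simp

lemma res:
  assumes w: "cmod w \<le> \<tau>" and w': "cmod w' \<le> \<tau>"
  shows "K w' - K w = cs (w' - w) * (x * K w' * K w)"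
proof -
  have "K w' - K w = K w' * ((1 - cs w * x) * K w) - (K w' * (1 - cs w' * x)) * K w"
    using K1[OF w] K2[OF w'] by simp
  also have "\<dots> = K w' * ((1 - cs w * x) - (1 - cs w' * x)) * K w"
    by (simp add: algebra_simps)
  also have "(1 - cs w * x) - (1 - cs w' * x) = cs (w' - w) * x"
    by (simp add: cs_diff left_diff_distrib)
  also have "K w' * (cs (w' - w) * x) * K w = cs (w' - w) * (K w' * x * K w)"
    by (metis mult_cs_assoc mult.assoc)
  also have "K w' * x * K w = x * K w' * K w" using Kx[OF w'] by simp
  finally show ?thesis .
qed

lemma res_norm:
  assumes w: "cmod w \<le> \<tau>" and w': "cmod w' \<le> \<tau>"
  shows "norm (K w' - K w) \<le> cmod (w' - w) * norm x * norm (K w') * norm (K w)"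
proof -
  have "norm (K w' - K w) = cmod (w' - w) * norm (x * K w' * K w)"
    by (simp add: res[OF w w'] norm_cs_mult)
  also have "\<dots> \<le> cmod (w' - w) * (norm x * norm (K w') * norm (K w))"
    by (intro mult_left_mono norm_mult3) simp
  finally show ?thesis by (simp add: mult.assoc)
qed

lemma K_cont: "continuous_on (cball (0::complex) \<tau>) K"
  unfolding continuous_on_iff
proof (intro ballI allI impI)
  fix w :: complex and e :: real assume w: "w \<in> cball (0::complex) \<tau>" and e: "(0::real) < e"
  have wn: "cmod w \<le> \<tau>" using w by (simp add: dist_norm)
  define A where "A = norm x + 1"
  define B where "B = norm (K w) + 1"
  have A: "A > 0" "norm x \<le> A" unfolding A_def by (smt (verit) norm_ge_zero)+
  have B: "B > 0" "norm (K w) \<le> B" unfolding B_def by (smt (verit) norm_ge_zero)+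
  define d where "d = min (1 / (2 * A * B)) (e / (2 * A * B * B))"
  have d: "d > 0" using A B e by (simp add: d_def)
  show "\<exists>d>0. \<forall>w'\<in>cball (0::complex) \<tau>. dist w' w < d \<longrightarrow> dist (K w') (K w) < e"
  proof (intro exI[of _ d] conjI ballI impI d)
    fix w' :: complex assume w': "w' \<in> cball (0::complex) \<tau>" and dw: "dist w' w < d"
    have wn': "cmod w' \<le> \<tau>" using w' by (simp add: dist_norm)
    define \<delta> where "\<delta> = cmod (w' - w)"
    have \<delta>: "\<delta> < d" "\<delta> \<ge> 0" using dw by (auto simp: \<delta>_def dist_norm)
    define k where "k = norm (K w')"
    have k0: "k \<ge> 0" by (simp add: k_def)
    have n1: "norm (K w' - K w) \<le> \<delta> * A * k * B"
    proof -
      have "norm (K w' - K w) \<le> \<delta> * norm x * k * norm (K w)"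
        using res_norm[OF wn wn'] by (simp add: \<delta>_def k_def)
      also have "\<dots> \<le> \<delta> * A * k * B"
        using A B \<delta> k0 by (intro mult_mono) (auto intro: mult_nonneg_nonneg)
      finally show ?thesis .
    qed
    have dAB: "\<delta> * A * B \<le> 1/2"
    proof -
      have "\<delta> * (A * B) \<le> d * (A * B)" using \<delta> A B by (intro mult_right_mono) auto
      also have "\<dots> \<le> 1 / (2 * A * B) * (A * B)" using A B by (intro mult_right_mono) (auto simp: d_def)
      also have "\<dots> = 1/2" using A B by (simp add: field_simps)
      finally show ?thesis by (simp add: mult.assoc)
    qed
    have "k \<le> norm (K w) + norm (K w' - K w)" unfolding k_def by (metis add.commute diff_add_cancel norm_triangle_ineq)
    also have "\<dots> \<le> B + \<delta> * A * B * k" using n1 B by (simp add: mult_ac)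
    also have "\<dots> \<le> B + k / 2" using dAB k0 by (simp add: mult_right_mono[OF dAB k0, simplified])
    finally have kB: "k \<le> 2 * B" by simp
    have "norm (K w' - K w) \<le> \<delta> * A * k * B" by (rule n1)
    also have "\<dots> \<le> \<delta> * A * (2 * B) * B" using kB A B \<delta> by (intro mult_mono mult_left_mono) auto
    also have "\<dots> < e"
    proof -
      have "\<delta> * (2 * A * B * B) < d * (2 * A * B * B)" using \<delta> A B by (intro mult_strict_right_mono) auto
      also have "\<dots> \<le> e / (2 * A * B * B) * (2 * A * B * B)" using A B by (intro mult_right_mono) (auto simp: d_def)
      also have "\<dots> = e" using A B by simp
      finally show ?thesis by (simp add: mult_ac)
    qed
    finally show "dist (K w') (K w) < e" by (simp add: dist_norm)
  qed
qed

lemma K_bound: "\<exists>M\<ge>0. \<forall>w. cmod w \<le> \<tau> \<longrightarrow> norm (K w) \<le> M"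
proof -
  have "compact (K ` cball (0::complex) \<tau>)" by (intro compact_continuous_image K_cont compact_cball)
  hence "bounded (K ` cball (0::complex) \<tau>)" by (rule compact_imp_bounded)
  then obtain M where M: "\<forall>y\<in>K ` cball (0::complex) \<tau>. norm y \<le> M" by (auto simp: bounded_iff)
  show ?thesis
    by (rule exI[of _ "max M 0"]) (use M in \<open>auto simp: dist_norm intro: le_max_iff_disj[THEN iffD2]\<close>)
qed

end

context resolvent
begin

lemma err_bound:
  assumes M: "\<forall>w. cmod w \<le> \<tau> \<longrightarrow> norm (K w) \<le> M" and M0: "M \<ge> 0"
    and w: "cmod w \<le> \<tau>" and w': "cmod w' \<le> \<tau>"
  shows "norm (K w' - K w - cs (w' - w) * (x * K w * K w)) \<le> (norm x ^ 2 * M ^ 3) * (cmod (w' - w))\<^sup>2"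
proof -
  define d where "d = w' - w"
  have "K w' - K w - cs d * (x * K w * K w) = cs d * (x * K w' * K w) - cs d * (x * K w * K w)"
    using res[OF w w'] by (simp add: d_def)
  also have "\<dots> = cs d * (x * (K w' - K w) * K w)"
    by (simp add: right_diff_distrib left_diff_distrib mult.assoc)
  also have "x * (K w' - K w) * K w = x * (cs d * (x * K w' * K w)) * K w"
    using res[OF w w'] by (simp add: d_def)
  also have "\<dots> = cs d * (x * (x * K w' * K w) * K w)"
    by (simp only: mult_cs_assoc mult.assoc[of _ _ "K w"])
  finally have eq: "K w' - K w - cs d * (x * K w * K w) = cs d * (cs d * (x * (x * K w' * K w) * K w))" .
  have nK: "norm (K w) \<le> M" "norm (K w') \<le> M" using M w w' by auto
  have "norm (x * (x * K w' * K w) * K w) \<le> norm x * (norm x * norm (K w') * norm (K w)) * norm (K w)"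
  proof -
    have "norm (x * (x * K w' * K w) * K w) \<le> norm x * norm (x * K w' * K w) * norm (K w)" by (rule norm_mult3)
    also have "\<dots> \<le> norm x * (norm x * norm (K w') * norm (K w)) * norm (K w)"
      by (intro mult_right_mono mult_left_mono norm_mult3) auto
    finally show ?thesis .
  qed
  also have "\<dots> \<le> norm x * (norm x * M * M) * M"
    using nK M0 by (intro mult_mono mult_left_mono) (auto intro!: mult_nonneg_nonneg)
  also have "\<dots> = norm x ^ 2 * M ^ 3" by (simp add: power2_eq_square power3_eq_cube)
  finally have n: "norm (x * (x * K w' * K w) * K w) \<le> norm x ^ 2 * M ^ 3" .
  have "norm (K w' - K w - cs (w' - w) * (x * K w * K w)) = (cmod d)\<^sup>2 * norm (x * (x * K w' * K w) * K w)"
    using eq by (simp add: d_def norm_cs_mult power2_eq_square)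
  also have "\<dots> \<le> (cmod d)\<^sup>2 * (norm x ^ 2 * M ^ 3)" by (intro mult_left_mono n) simp
  finally show ?thesis by (simp add: d_def mult.commute)
qed

end

context resolvent
begin

lemma S_bound:
  assumes M: "\<forall>w. cmod w \<le> \<tau> \<longrightarrow> norm (K w) \<le> M" and M0: "M \<ge> 0" and N: "N \<ge> 2"
    and t: "0 \<le> t" "t \<le> \<tau>"
  defines "\<zeta> \<equiv> cis (2 * pi / real N)"
  shows "norm (\<Sum>j<N. cs (\<zeta> ^ j) * (x * K (of_real t * \<zeta> ^ j) * K (of_real t * \<zeta> ^ j)))
           \<le> real N * (norm x ^ 2 * M ^ 3) * t * cmod (\<zeta> - 1)"
proof -
  note R = root_unity_props[OF N, folded \<zeta>_def]
  define C where "C = norm x ^ 2 * M ^ 3"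
  have C0: "C \<ge> 0" using M0 by (simp add: C_def)
  define a where "a j = complex_of_real t * \<zeta> ^ j" for j
  define D where "D j = x * K (a j) * K (a j)" for j
  have an: "cmod (a j) \<le> \<tau>" for j using t R(2) by (simp add: a_def norm_mult norm_power)
  have "(\<Sum>j<N. cs (\<zeta> ^ j) * (x * K (of_real t * \<zeta> ^ j) * K (of_real t * \<zeta> ^ j))) = (\<Sum>j<N. cs (\<zeta> ^ j) * D j)"
    by (simp add: D_def a_def)
  moreover have "norm (\<Sum>j<N. cs (\<zeta> ^ j) * D j) \<le> real N * C * t * cmod (\<zeta> - 1)"
  proof (cases "t = 0")
    case True
    hence D0: "D j = x * K 0 * K 0" for j by (simp add: D_def a_def)
    have "(\<Sum>j<N. cs (\<zeta> ^ j) * D j) = (\<Sum>j<N. cs (\<zeta> ^ j) * (x * K 0 * K 0))" by (simp add: D0)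
    also have "\<dots> = (\<Sum>j<N. cs (\<zeta> ^ j)) * (x * K 0 * K 0)" by (simp add: sum_distrib_right)
    also have "(\<Sum>j<N. cs (\<zeta> ^ j)) = (cs (\<Sum>j<N. (\<zeta> ^ 1) ^ j) :: 'a)" by (simp add: cs_sum)
    also have "\<dots> = 0" using R(3)[of 1] N by simp
    finally show ?thesis using True by simp
  next
    case False
    hence tpos: "t > 0" using t by simp
    define S where "S = (\<Sum>j<N. cs (\<zeta> ^ j) * D j)"
    define e where "e j = K (a (Suc j)) - K (a j) - cs (a (Suc j) - a j) * D j" for j
    have da: "a (Suc j) - a j = (complex_of_real t * (\<zeta> - 1)) * \<zeta> ^ j" for j
      by (simp add: a_def algebra_simps)
    have nda: "cmod (a (Suc j) - a j) = t * cmod (\<zeta> - 1)" for j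
      using t R(2) by (simp add: da norm_mult norm_power)
    have en: "norm (e j) \<le> C * (t * cmod (\<zeta> - 1))\<^sup>2" for j
      using err_bound[OF M M0 an an, of "Suc j" j] by (simp add: e_def nda D_def C_def)
    have dif: "cs (a (Suc j) - a j) * D j = cs (complex_of_real t * (\<zeta> - 1)) * (cs (\<zeta> ^ j) * D j)" for j
      by (simp add: da cs_mult mult.assoc)
    have tel: "(\<Sum>j<N. K (a (Suc j)) - K (a j)) = 0"
      using R(1) by (simp only: sum_lessThan_telescope[of "\<lambda>j. K (a j)"]) (simp add: a_def)
    have "(\<Sum>j<N. K (a (Suc j)) - K (a j)) = (\<Sum>j<N. cs (complex_of_real t * (\<zeta> - 1)) * (cs (\<zeta> ^ j) * D j) + e j)"
      by (intro sum.cong refl) (simp add: e_def dif)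
    also have "\<dots> = cs (complex_of_real t * (\<zeta> - 1)) * S + (\<Sum>j<N. e j)"
      by (simp add: sum.distrib S_def sum_distrib_left)
    finally have "cs (complex_of_real t * (\<zeta> - 1)) * S = - (\<Sum>j<N. e j)" using tel
      by (simp add: eq_neg_iff_add_eq_0)
    hence "t * cmod (\<zeta> - 1) * norm S = norm (\<Sum>j<N. e j)"
      using tpos by (metis norm_cs_mult norm_minus_cancel norm_mult norm_of_real abs_of_pos)
    also have "\<dots> \<le> (\<Sum>j<N. norm (e j))" by (rule norm_sum)
    also have "\<dots> \<le> (\<Sum>j<N. C * (t * cmod (\<zeta> - 1))\<^sup>2)" by (intro sum_mono en)
    also have "\<dots> = (t * cmod (\<zeta> - 1)) * (real N * C * t * cmod (\<zeta> - 1))"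
      by (simp add: power2_eq_square mult_ac)
    finally have "t * cmod (\<zeta> - 1) * norm S \<le> (t * cmod (\<zeta> - 1)) * (real N * C * t * cmod (\<zeta> - 1))" .
    moreover have "t * cmod (\<zeta> - 1) > 0" using tpos R(4) by simp
    ultimately show ?thesis unfolding S_def by (rule mult_left_le_imp_le)
  qed
  ultimately show ?thesis by (simp add: C_def)
qed

end

context resolvent
begin

lemma step_bound:
  assumes M: "\<forall>w. cmod w \<le> \<tau> \<longrightarrow> norm (K w) \<le> M" and M0: "M \<ge> 0" and N: "N \<ge> 2"
    and t: "0 \<le> t" "t \<le> t'" "t' \<le> \<tau>"
  defines "\<zeta> \<equiv> cis (2 * pi / real N)"
  shows "norm (cs (1 / of_nat N) * (\<Sum>j<N. K (of_real t' * \<zeta> ^ j)) - cs (1 / of_nat N) * (\<Sum>j<N. K (of_real t * \<zeta> ^ j)))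
          \<le> (t' - t) * ((norm x ^ 2 * M ^ 3) * t * cmod (\<zeta> - 1)) + (norm x ^ 2 * M ^ 3) * (t' - t)\<^sup>2"
proof -
  note R = root_unity_props[OF N, folded \<zeta>_def]
  define C where "C = norm x ^ 2 * M ^ 3"
  have C0: "C \<ge> 0" using M0 by (simp add: C_def)
  define a where "a j = complex_of_real t * \<zeta> ^ j" for j
  define b where "b j = complex_of_real t' * \<zeta> ^ j" for j
  define D where "D j = x * K (a j) * K (a j)" for j
  define S where "S = (\<Sum>j<N. cs (\<zeta> ^ j) * D j)"
  have an: "cmod (a j) \<le> \<tau>" for j using t R(2) by (simp add: a_def norm_mult norm_power)
  have bn: "cmod (b j) \<le> \<tau>" for j using t R(2) by (simp add: b_def norm_mult norm_power)
  have Sb: "norm S \<le> real N * C * t * cmod (\<zeta> - 1)"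
    using S_bound[OF M M0 N t(1), of] t by (simp add: S_def D_def a_def C_def \<zeta>_def)
  define f where "f j = K (b j) - K (a j) - cs (b j - a j) * D j" for j
  have dba: "b j - a j = complex_of_real (t' - t) * \<zeta> ^ j" for j by (simp add: a_def b_def algebra_simps)
  have ndba: "cmod (b j - a j) = t' - t" for j using t R(2) by (simp add: dba norm_mult norm_power del: of_real_diff)
  have fn: "norm (f j) \<le> C * (t' - t)\<^sup>2" for j
    using err_bound[OF M M0 an bn, of j j] by (simp add: f_def ndba D_def C_def)
  have "(\<Sum>j<N. K (b j) - K (a j)) = (\<Sum>j<N. cs (complex_of_real (t' - t)) * (cs (\<zeta> ^ j) * D j) + f j)"
    by (intro sum.cong refl) (simp add: f_def dba cs_mult mult.assoc)
  also have "\<dots> = cs (complex_of_real (t' - t)) * S + (\<Sum>j<N. f j)"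
    by (simp add: sum.distrib S_def sum_distrib_left)
  finally have eq: "(\<Sum>j<N. K (b j) - K (a j)) = cs (complex_of_real (t' - t)) * S + (\<Sum>j<N. f j)" .
  have "norm (\<Sum>j<N. K (b j) - K (a j)) \<le> (t' - t) * norm S + (\<Sum>j<N. norm (f j))"
    unfolding eq using t by (intro order.trans[OF norm_triangle_ineq] add_mono norm_sum) (simp add: norm_cs_mult del: of_real_diff)
  also have "\<dots> \<le> (t' - t) * (real N * C * t * cmod (\<zeta> - 1)) + (\<Sum>j<N. C * (t' - t)\<^sup>2)"
    using t by (intro add_mono mult_left_mono Sb sum_mono fn) auto
  also have "\<dots> = real N * ((t' - t) * (C * t * cmod (\<zeta> - 1)) + C * (t' - t)\<^sup>2)"
    by (simp add: algebra_simps)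
  finally have nsum: "norm (\<Sum>j<N. K (b j) - K (a j)) \<le> real N * ((t' - t) * (C * t * cmod (\<zeta> - 1)) + C * (t' - t)\<^sup>2)" .
  have "cs (1 / of_nat N) * (\<Sum>j<N. K (b j)) - cs (1 / of_nat N) * (\<Sum>j<N. K (a j)) = cs (1 / of_nat N) * (\<Sum>j<N. K (b j) - K (a j))"
    by (simp add: right_diff_distrib sum_subtractf)
  hence "norm (cs (1 / of_nat N) * (\<Sum>j<N. K (b j)) - cs (1 / of_nat N) * (\<Sum>j<N. K (a j))) = (1 / real N) * norm (\<Sum>j<N. K (b j) - K (a j))"
    by (simp add: norm_cs_mult norm_divide)
  also have "\<dots> \<le> (1 / real N) * (real N * ((t' - t) * (C * t * cmod (\<zeta> - 1)) + C * (t' - t)\<^sup>2))"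
    by (intro mult_left_mono nsum) simp
  also have "\<dots> = (t' - t) * (C * t * cmod (\<zeta> - 1)) + C * (t' - t)\<^sup>2" using N by simp
  finally show ?thesis by (simp add: a_def b_def C_def)
qed

lemma Phi0:
  assumes N: "N \<ge> 1" and tau: "\<tau> \<ge> 0"
  shows "cs (1 / of_nat N) * (\<Sum>j<N. K (of_real 0 * \<zeta> ^ j)) = 1"
proof -
  have s: "(\<Sum>j<N. K (of_real 0 * \<zeta> ^ j)) = (cs (of_nat N) :: 'a)" using K0[OF tau] by (simp add: cs_of_nat)
  have "cs (1 / of_nat N) * cs (of_nat N) = (cs (1 / of_nat N * of_nat N) :: 'a)" by (simp only: cs_mult)
  also have "\<dots> = 1" using N by simp
  finally show ?thesis by (simp only: s)
qed

end

context resolvent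
begin

lemma total_bound:
  assumes M: "\<forall>w. cmod w \<le> \<tau> \<longrightarrow> norm (K w) \<le> M" and M0: "M \<ge> 0" and N: "N \<ge> 2" and tau: "\<tau> \<ge> 0"
  defines "\<zeta> \<equiv> cis (2 * pi / real N)"
  defines "\<Phi> \<equiv> \<lambda>s. cs (1 / of_nat N) * (\<Sum>j<N. K (of_real s * \<zeta> ^ j))"
  shows "norm (\<Phi> \<tau> - \<Phi> 0) \<le> (norm x ^ 2 * M ^ 3) * \<tau>\<^sup>2 * cmod (\<zeta> - 1) + (norm x ^ 2 * M ^ 3) * \<tau>\<^sup>2 / real N"
proof -
  define C where "C = norm x ^ 2 * M ^ 3"
  have C0: "C \<ge> 0" using M0 by (simp add: C_def)
  define c where "c = cmod (\<zeta> - 1)"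
  have c0: "c \<ge> 0" by (simp add: c_def)
  define tt where "tt i = \<tau> * real i / real N" for i
  have Npos: "real N > 0" using N by simp
  have tt0: "tt 0 = 0" and ttN: "tt N = \<tau>" using Npos by (auto simp: tt_def)
  have ttd: "tt (Suc i) - tt i = \<tau> / real N" for i using Npos by (simp add: tt_def field_simps)
  have ttle: "tt i \<le> \<tau>" if "i \<le> N" for i
  proof -
    have "\<tau> * real i \<le> \<tau> * real N" using that tau by (intro mult_left_mono) auto
    thus ?thesis using Npos by (simp add: tt_def divide_le_eq)
  qed
  have tt_nn: "tt i \<ge> 0" for i using tau Npos by (simp add: tt_def)
  have "\<Phi> \<tau> - \<Phi> 0 = (\<Sum>i<N. \<Phi> (tt (Suc i)) - \<Phi> (tt i))"
    using sum_lessThan_telescope[of "\<lambda>i. \<Phi> (tt i)" N] by (simp only: ttN tt0)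
  hence "norm (\<Phi> \<tau> - \<Phi> 0) \<le> (\<Sum>i<N. norm (\<Phi> (tt (Suc i)) - \<Phi> (tt i)))"
    by (simp add: norm_sum)
  also have "\<dots> \<le> (\<Sum>i<N. (\<tau> / real N) * (C * \<tau> * c) + C * (\<tau> / real N)\<^sup>2)"
  proof (intro sum_mono)
    fix i assume i: "i \<in> {..<N}"
    have "0 \<le> \<tau> / real N" using tau Npos by simp
    hence le: "tt i \<le> tt (Suc i)" using ttd[of i] by linarith
    have "norm (\<Phi> (tt (Suc i)) - \<Phi> (tt i)) \<le> (tt (Suc i) - tt i) * (C * tt i * c) + C * (tt (Suc i) - tt i)\<^sup>2"
      using step_bound[OF M M0 N tt_nn le ttle[of "Suc i"]] i by (simp add: \<Phi>_def C_def c_def \<zeta>_def)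
    also have "\<dots> \<le> (\<tau> / real N) * (C * \<tau> * c) + C * (\<tau> / real N)\<^sup>2"
      unfolding ttd using ttle[of i] i tau Npos C0 c0
      by (intro add_mono mult_left_mono mult_right_mono) auto
    finally show "norm (\<Phi> (tt (Suc i)) - \<Phi> (tt i)) \<le> (\<tau> / real N) * (C * \<tau> * c) + C * (\<tau> / real N)\<^sup>2" .
  qed
  also have "\<dots> = C * \<tau>\<^sup>2 * c + C * \<tau>\<^sup>2 / real N"
    using Npos by (simp add: field_simps power2_eq_square)
  finally show ?thesis by (simp add: C_def c_def)
qed

lemma ident:
  assumes N: "N \<ge> 2" and tau: "\<tau> \<ge> 0"
  defines "\<zeta> \<equiv> cis (2 * pi / real N)"
  shows "(1 - cs (of_real (\<tau> ^ N)) * x ^ N) * (cs (1 / of_nat N) * (\<Sum>j<N. K (of_real \<tau> * \<zeta> ^ j))) = 1"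
proof -
  note R = root_unity_props[OF N, folded \<zeta>_def]
  define a where "a j = complex_of_real \<tau> * \<zeta> ^ j" for j
  have an: "cmod (a j) \<le> \<tau>" for j using tau R(2) by (simp add: a_def norm_mult norm_power)
  have aN: "a j ^ N = of_real (\<tau> ^ N)" for j
  proof -
    have "(\<zeta> ^ j) ^ N = 1" by (metis power_mult mult.commute R(1) power_one)
    thus ?thesis by (simp add: a_def power_mult_distrib)
  qed
  have each: "(1 - cs (of_real (\<tau> ^ N)) * x ^ N) * K (a j) = (\<Sum>k<N. cs (a j ^ k) * x ^ k)" for j
  proof -
    define y where "y = cs (a j) * x"
    have "cs (of_real (\<tau> ^ N)) * x ^ N = y ^ N" by (simp add: y_def cs_mult_power aN)
    hence "(1 - cs (of_real (\<tau> ^ N)) * x ^ N) * K (a j) = (\<Sum>k<N. y ^ k) * ((1 - y) * K (a j))"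
      by (simp add: geom_ring mult.assoc)
    also have "(1 - y) * K (a j) = 1" using K1[OF an] by (simp add: y_def)
    finally show ?thesis by (simp add: y_def cs_mult_power)
  qed
  have pw: "a j ^ k = of_real \<tau> ^ k * (\<zeta> ^ k) ^ j" for j k
    by (simp add: a_def power_mult_distrib flip: power_mult) (simp add: mult.commute)
  have inner: "(\<Sum>j<N. a j ^ k) = (if k = 0 then of_nat N else 0)" if "k < N" for k
  proof (cases "k = 0")
    case True thus ?thesis by simp
  next
    case False
    have "(\<Sum>j<N. a j ^ k) = of_real \<tau> ^ k * (\<Sum>j<N. (\<zeta> ^ k) ^ j)" by (simp add: pw sum_distrib_left)
    also have "\<dots> = 0" using R(3)[of k] False that by simp
    finally show ?thesis using False by simp
  qed
  have "(\<Sum>j<N. (1 - cs (of_real (\<tau> ^ N)) * x ^ N) * K (a j)) = (\<Sum>j<N. \<Sum>k<N. cs (a j ^ k) * x ^ k)"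
    by (intro sum.cong refl each)
  also have "\<dots> = (\<Sum>k<N. \<Sum>j<N. cs (a j ^ k) * x ^ k)" by (rule sum.swap)
  also have "\<dots> = (\<Sum>k<N. cs (\<Sum>j<N. a j ^ k) * x ^ k)" by (simp add: cs_sum sum_distrib_right)
  also have "\<dots> = (\<Sum>k<N. if k = 0 then cs (of_nat N) else 0)"
    by (intro sum.cong refl) (simp add: inner)
  also have "\<dots> = cs (of_nat N)" using N by simp
  finally have sm: "(\<Sum>j<N. (1 - cs (of_real (\<tau> ^ N)) * x ^ N) * K (a j)) = cs (of_nat N)" .
  have "(1 - cs (of_real (\<tau> ^ N)) * x ^ N) * (cs (1 / of_nat N) * (\<Sum>j<N. K (a j)))
        = cs (1 / of_nat N) * (\<Sum>j<N. (1 - cs (of_real (\<tau> ^ N)) * x ^ N) * K (a j))"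
    by (simp only: mult_cs_assoc sum_distrib_left)
  also have "\<dots> = cs (1 / of_nat N) * cs (of_nat N)" by (simp only: sm)
  also have "\<dots> = (cs (1 / of_nat N * of_nat N) :: 'a)" by (simp only: cs_mult)
  also have "\<dots> = 1" using N by simp
  finally show ?thesis by (simp add: a_def)
qed

lemma GL_loc:
  assumes tau: "\<tau> > 0"
  shows "\<exists>N0. \<forall>N\<ge>N0. \<tau> ^ N * norm (x ^ N) \<le> 1/2"
proof -
  obtain M where M0: "M \<ge> 0" and M: "\<forall>w. cmod w \<le> \<tau> \<longrightarrow> norm (K w) \<le> M"
    using K_bound by blast
  define C where "C = norm x ^ 2 * M ^ 3"
  have C0: "C \<ge> 0" using M0 by (simp add: C_def)
  define B where "B = C * \<tau>\<^sup>2 * (2 * pi + 1)"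
  have B0: "B \<ge> 0" using C0 by (simp add: B_def)
  define N0 where "N0 = max 2 (nat \<lceil>4 * B\<rceil>)"
  show ?thesis
  proof (intro exI[of _ N0] allI impI)
    fix N assume NN0: "N \<ge> N0"
    hence N: "N \<ge> 2" by (simp add: N0_def)
    have Npos: "real N > 0" using N by simp
    have "4 * B \<le> real N" using NN0 unfolding N0_def by linarith
    hence Bq: "B / real N \<le> 1/4" using Npos by (simp add: divide_le_eq)
    define \<zeta> where "\<zeta> = cis (2 * pi / real N)"
    note R = root_unity_props[OF N, folded \<zeta>_def]
    define \<Phi> where "\<Phi> = cs (1 / of_nat N) * (\<Sum>j<N. K (of_real \<tau> * \<zeta> ^ j))"
    have \<Phi>0: "cs (1 / of_nat N) * (\<Sum>j<N. K (of_real 0 * \<zeta> ^ j)) = 1"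
      using Phi0[of N "\<zeta>"] N tau by simp
    have "norm (\<Phi> - 1) \<le> C * \<tau>\<^sup>2 * cmod (\<zeta> - 1) + C * \<tau>\<^sup>2 / real N"
      using total_bound[OF M M0 N] tau \<Phi>0 by (simp add: \<Phi>_def \<zeta>_def C_def)
    also have "\<dots> \<le> C * \<tau>\<^sup>2 * (2 * pi / real N) + C * \<tau>\<^sup>2 / real N"
      using R(5) C0 by (intro add_mono mult_left_mono) auto
    also have "\<dots> = B / real N" using Npos by (simp add: B_def field_simps)
    finally have "norm (\<Phi> - 1) \<le> B / real N" .
    hence n\<Phi>: "norm (\<Phi> - 1) \<le> 1/4" using Bq by linarith
    define y where "y = cs (of_real (\<tau> ^ N)) * x ^ N"
    have id: "(1 - y) * \<Phi> = 1" using ident[OF N] tau by (simp add: y_def \<Phi>_def \<zeta>_def)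
    have yeq: "y = (\<Phi> - 1) - y * (\<Phi> - 1)"
    proof -
      have "\<Phi> - y * \<Phi> = 1" using id by (simp add: left_diff_distrib)
      thus ?thesis by (simp add: right_diff_distrib algebra_simps)
    qed
    have "norm y \<le> norm (\<Phi> - 1) + norm y * norm (\<Phi> - 1)"
      by (metis yeq norm_triangle_ineq4 norm_mult_ineq add_left_mono order_trans)
    also have "\<dots> \<le> 1/4 + norm y * (1/4)" using n\<Phi> by (intro add_mono mult_left_mono) auto
    finally have "norm y \<le> 1/3" by simp
    moreover have "norm y = \<tau> ^ N * norm (x ^ N)" using tau by (simp add: y_def norm_cs_mult norm_power del: of_real_power)
    ultimately show "\<tau> ^ N * norm (x ^ N) \<le> 1/2" by simp
  qed
qed

end

lemma GL:
  fixes x :: "'a::cstar_algebra"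
  assumes tau: "\<tau> > 0" and inv: "\<And>w. cmod w \<le> \<tau> \<Longrightarrow> invertible_el (1 - cs w * x)"
  shows "\<exists>N0. \<forall>N\<ge>N0. \<tau> ^ N * norm (x ^ N) \<le> 1/2"
proof -
  define K where "K w = (SOME k. (1 - cs w * x) * k = 1 \<and> k * (1 - cs w * x) = 1)" for w
  have "(1 - cs w * x) * K w = 1 \<and> K w * (1 - cs w * x) = 1" if "cmod w \<le> \<tau>" for w
    unfolding K_def by (rule someI_ex) (use inv[OF that] in \<open>auto simp: invertible_el_def\<close>)
  then interpret resolvent x \<tau> K by unfold_locales auto
  show ?thesis by (rule GL_loc[OF tau])
qed

lemma norm_le_spec:
  fixes e :: "'a::cstar_algebra"
  assumes sa: "adj e = e" and sp: "\<And>z. z \<in> spectrum_el e \<Longrightarrow> cmod z \<le> c" and cnn: "c \<ge> 0"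
  shows "norm e \<le> c"
proof (rule ccontr)
  assume "\<not> norm e \<le> c"
  hence gt: "norm e > c" by simp
  define c0 where "c0 = max c 0"
  have c0: "c0 \<ge> 0" "c0 \<ge> c" "c0 < norm e" using gt cnn by (auto simp: c0_def)
  define \<rho> where "\<rho> = (c0 + norm e) / 2"
  have \<rho>: "\<rho> > c0" "\<rho> < norm e" "\<rho> > 0" using c0 by (auto simp: \<rho>_def)
  define \<tau> where "\<tau> = 1 / \<rho>"
  have \<tau>: "\<tau> > 0" using \<rho> by (simp add: \<tau>_def)
  have inv: "invertible_el (1 - cs w * e)" if w: "cmod w \<le> \<tau>" for w
  proof (cases "w = 0")
    case True thus ?thesis by (simp add: inv_one)
  next
    case False
    have "cmod (inverse w) = 1 / cmod w" by (simp add: norm_inverse divide_inverse)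
    also have "\<dots> \<ge> 1 / \<tau>" using w False \<tau> by (intro divide_left_mono) (auto intro: mult_pos_pos)
    finally have "cmod (inverse w) \<ge> \<rho>" by (simp add: \<tau>_def)
    hence "cmod (inverse w) > c" using \<rho> c0 by linarith
    hence "inverse w \<notin> spectrum_el e" using sp by force
    hence i1: "invertible_el (e - cs (inverse w))" by (simp add: spectrum_cs)
    have "invertible_el (cs (- w) * (e - cs (inverse w)))" using False by (intro inv_mult inv_cs i1) auto
    moreover have "cs (- w) * (e - cs (inverse w)) = 1 - cs w * e"
    proof -
      have m: "cs (- w) * cs (inverse w) = (-1::'a)" using False by (simp add: cs_minus flip: cs_mult)
      have "cs (- w) * (e - cs (inverse w)) = cs (- w) * e - cs (- w) * cs (inverse w)"
        by (simp add: right_diff_distrib)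
      also have "\<dots> = cs (- w) * e + 1" by (simp add: m)
      also have "\<dots> = 1 - cs w * e" by (simp add: cs_minus)
      finally show ?thesis .
    qed
    ultimately show ?thesis by simp
  qed
  obtain N0 where N0: "\<forall>N\<ge>N0. \<tau> ^ N * norm (e ^ N) \<le> 1/2" using GL[OF \<tau> inv] by blast
  define N where "N = (2::nat) ^ N0"
  have "N \<ge> N0" unfolding N_def using less_exp[of N0] by linarith
  hence le: "\<tau> ^ N * norm (e ^ N) \<le> 1/2" using N0 by blast
  have "norm (e ^ N) = norm e ^ N" unfolding N_def by (rule norm_sa_pow2[OF sa])
  hence "\<tau> ^ N * norm (e ^ N) = (\<tau> * norm e) ^ N" by (simp add: power_mult_distrib)
  moreover have "\<tau> * norm e \<ge> 1" using \<rho> by (simp add: \<tau>_def)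
  ultimately have "\<tau> ^ N * norm (e ^ N) \<ge> 1" by (simp add: one_le_power)
  with le show False by simp
qed

lemma real_spec:
  fixes s :: "'a::cstar_algebra"
  assumes sa: "adj s = s" and z: "z \<in> spectrum_el s"
  shows "Im z = 0"
proof (rule ccontr)
  assume \<beta>: "Im z \<noteq> 0"
  have key: "2 * Im z * t \<le> norm s ^ 2" for t :: real
  proof -
    define it where "it = (\<i> * complex_of_real t)"
    have eq: "s + cs it - cs (z + it) = s - cs z" by (simp add: cs_add)
    have "z + it \<in> spectrum_el (s + cs it)" using z unfolding spectrum_cs eq .
    hence b: "cmod (z + it) \<le> norm (s + cs it)" by (rule spec_bound)
    have adjit: "adj (cs it) = (cs (- it) :: 'a)" by (simp add: adj_cs it_def)
    have "adj (s + cs it) * (s + cs it) = (s + cs (- it)) * (s + cs it)" by (simp add: adj_add sa adjit)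
    also have "\<dots> = s * s + (cs (- it) * s + s * cs it) + cs (- it) * cs it" by (simp add: algebra_simps)
    also have "cs (- it) * s + s * cs it = 0" by (simp add: cs_minus cs_comm)
    also have "cs (- it) * cs it = (cs (complex_of_real (t ^ 2)) :: 'a)"
    proof -
      have "- it * it = complex_of_real (t ^ 2)" by (simp add: it_def power2_eq_square complex_eq_iff)
      thus ?thesis by (simp only: cs_mult[symmetric])
    qed
    finally have eq: "adj (s + cs it) * (s + cs it) = s * s + cs (complex_of_real (t ^ 2))" by simp
    have "norm (s + cs it) ^ 2 = norm (s * s + cs (complex_of_real (t ^ 2)))" by (simp add: eq flip: norm_sq_adj)
    also have "\<dots> \<le> norm (s * s) + t ^ 2" by (rule order.trans[OF norm_triangle_ineq]) (simp add: norm_cs norm_power)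
    also have "\<dots> = norm s ^ 2 + t ^ 2" by (simp add: norm_sa_square[OF sa])
    finally have n2: "norm (s + cs it) ^ 2 \<le> norm s ^ 2 + t ^ 2" .
    have "(cmod (z + it)) ^ 2 \<le> norm (s + cs it) ^ 2" using b by (intro power_mono) auto
    moreover have "(cmod (z + it)) ^ 2 = Re z ^ 2 + (Im z + t) ^ 2" by (simp add: cmod_power2 it_def)
    ultimately have "Re z ^ 2 + (Im z + t) ^ 2 \<le> norm s ^ 2 + t ^ 2" using n2 by simp
    hence "Re z ^ 2 + Im z ^ 2 + 2 * Im z * t \<le> norm s ^ 2" by (simp add: power2_sum)
    moreover have "Re z ^ 2 + Im z ^ 2 \<ge> 0" by simp
    ultimately show ?thesis by linarith
  qed
  have "2 * Im z * ((norm s ^ 2 + 1) / (2 * Im z)) \<le> norm s ^ 2" by (rule key)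
  thus False using \<beta> by simp
qed

lemma positive_one: "positive_el (1::'a::cstar_algebra)"
proof -
  have z1: "z = 1" if z: "z \<in> spectrum_el (1::'a)" for z
  proof (rule ccontr)
    assume "z \<noteq> 1"
    hence "invertible_el (cs (1 - z) :: 'a)" by (intro inv_cs) auto
    hence "invertible_el (1 - cs z :: 'a)" by (simp add: cs_diff)
    with z show False by (simp add: spectrum_cs)
  qed
  have "\<forall>z\<in>spectrum_el (1::'a). z \<in> \<real> \<and> 0 \<le> Re z"
  proof
    fix z assume "z \<in> spectrum_el (1::'a)"
    hence "z = 1" by (rule z1)
    thus "z \<in> \<real> \<and> 0 \<le> Re z" by simp
  qed
  thus ?thesis by (simp add: positive_el_def)
qed

lemma pow_trick:
  fixes a m :: real
  assumes m: "m \<ge> 0" and a: "a \<ge> 0" and le: "\<And>k. a ^ (2 ^ k) \<le> 2 * m ^ (2 ^ k)"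
  shows "a \<le> m"
proof (rule ccontr)
  assume "\<not> a \<le> m"
  hence am: "a > m" by simp
  show False
  proof (cases "m = 0")
    case True
    from le[of 0] True am show False by simp
  next
    case False
    hence mpos: "m > 0" using m by simp
    define r where "r = a / m"
    have r1: "r > 1" using am mpos by (simp add: r_def)
    define k where "k = nat \<lceil>1 / (r - 1)\<rceil>"
    have "1 / (r - 1) \<le> real k" unfolding k_def by linarith
    hence kk: "1 < (real k + 1) * (r - 1)" using r1 by (simp add: field_simps)
    have "real k + 1 \<le> real (2 ^ k)" by (induct k) auto
    hence "(real k + 1) * (r - 1) \<le> real (2 ^ k) * (r - 1)" using r1 by (intro mult_right_mono) auto
    also have "1 + real (2 ^ k) * (r - 1) \<le> (1 + (r - 1)) ^ (2 ^ k)"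
      using r1 by (intro Bernoulli_inequality) simp
    finally have "2 < r ^ (2 ^ k)" using kk by simp
    also have "r ^ (2 ^ k) = a ^ (2 ^ k) / m ^ (2 ^ k)" by (simp add: r_def power_divide)
    also have "\<dots> \<le> 2" using le[of k] mpos by (simp add: divide_le_eq)
    finally show False by simp
  qed
qed

lemma orth_power:
  fixes X Y :: "'a::cstar_algebra"
  assumes "X * Y = 0" "Y * X = 0" "n \<ge> 1"
  shows "(X + Y) ^ n = X ^ n + Y ^ n"
  using assms(3)
proof (induct n)
  case (Suc n)
  show ?case
  proof (cases "n = 0")
    case True thus ?thesis by simp
  next
    case False
    hence IH: "(X + Y) ^ n = X ^ n + Y ^ n" using Suc by simp
    obtain m where m: "n = Suc m" using False by (cases n) auto
    have xy: "X * Y ^ n = 0" using assms(1) by (simp add: m mult.assoc[symmetric])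
    have yx: "Y * X ^ n = 0" using assms(2) by (simp add: m mult.assoc[symmetric])
    have "(X + Y) ^ Suc n = (X + Y) * (X ^ n + Y ^ n)" by (simp add: IH)
    also have "\<dots> = X ^ Suc n + Y ^ Suc n + (X * Y ^ n + Y * X ^ n)" by (simp add: algebra_simps)
    finally show ?thesis by (simp add: xy yx)
  qed
qed simp

lemma orth_norm:
  fixes X Y :: "'a::cstar_algebra"
  assumes sx: "adj X = X" and sy: "adj Y = Y" and xy: "X * Y = 0" "Y * X = 0"
    and nx: "norm X \<le> m" and ny: "norm Y \<le> m"
  shows "norm (X + Y) \<le> m"
proof (rule pow_trick)
  show "m \<ge> 0" using nx norm_ge_zero order_trans by blast
  show "norm (X + Y) \<ge> 0" by simp
  fix k :: nat
  have sxy: "adj (X + Y) = X + Y" by (simp add: adj_add sx sy)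
  have "norm (X + Y) ^ (2 ^ k) = norm ((X + Y) ^ (2 ^ k))" by (rule norm_sa_pow2[OF sxy, symmetric])
  also have "\<dots> = norm (X ^ (2 ^ k) + Y ^ (2 ^ k))" using orth_power[OF xy, of "2 ^ k"] by simp
  also have "\<dots> \<le> norm X ^ (2 ^ k) + norm Y ^ (2 ^ k)"
    by (rule order.trans[OF norm_triangle_ineq]) (simp add: norm_sa_pow2 sx sy)
  also have "\<dots> \<le> m ^ (2 ^ k) + m ^ (2 ^ k)" using nx ny by (intro add_mono power_mono) auto
  finally show "norm (X + Y) ^ (2 ^ k) \<le> 2 * m ^ (2 ^ k)" by simp
qed

lemma compression_positive:
  fixes a v :: "'a::cstar_algebra"
  assumes pa: "positive_el a" and pv: "projection_el v"
  shows "positive_el (v * a * v)"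
proof -
  have sa: "adj a = a" using pa by (simp add: positive_el_def)
  have sp: "\<And>z. z \<in> spectrum_el a \<Longrightarrow> z \<in> \<real> \<and> 0 \<le> Re z" using pa by (simp add: positive_el_def)
  have v: "v * v = v" "adj v = v" using pv by (auto simp: projection_el_def)
  have v3: "v * (v * y) = v * y" for y by (metis v(1) mult.assoc)
  define t where "t = norm a"
  have t0: "t \<ge> 0" by (simp add: t_def)
  define e where "e = cs (complex_of_real t) - a"
  have se: "adj e = e" by (simp add: e_def adj_diff adj_cs sa)
  have ne: "norm e \<le> t"
  proof (rule norm_le_spec[OF se _ t0])
    fix \<mu> assume \<mu>: "\<mu> \<in> spectrum_el e"
    have "e - cs \<mu> = - (a - cs (complex_of_real t - \<mu>))" by (simp add: e_def cs_diff)
    hence "\<not> invertible_el (a - cs (complex_of_real t - \<mu>))" using \<mu> inv_minus by (fastforce simp: spectrum_cs)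
    hence l: "complex_of_real t - \<mu> \<in> spectrum_el a" by (simp add: spectrum_cs)
    have r: "Im \<mu> = 0" "0 \<le> t - Re \<mu>" using sp[OF l] by (auto simp: complex_is_Real_iff)
    have "cmod (complex_of_real t - \<mu>) \<le> t" using spec_bound[OF l] by (simp add: t_def)
    hence "\<bar>t - Re \<mu>\<bar> \<le> t" using r by (simp add: cmod_def)
    hence "0 \<le> Re \<mu>" "Re \<mu> \<le> t" using r by auto
    thus "cmod \<mu> \<le> t" using r by (simp add: cmod_def)
  qed
  define X where "X = cs (complex_of_real t) * (1 - v)"
  define Y where "Y = v * e * v"
  have sX: "adj X = X" by (simp add: X_def adj_mult adj_cs adj_diff v cs_comm)
  have sY: "adj Y = Y" by (simp add: Y_def adj_mult se v mult.assoc)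
  have XY: "X * Y = 0" by (simp add: X_def Y_def mult.assoc right_diff_distrib left_diff_distrib v3)
  have YX: "Y * X = 0"
  proof -
    have "Y * X = cs (complex_of_real t) * (v * e * v * (1 - v))" by (simp add: X_def Y_def mult_cs_assoc)
    also have "v * e * v * (1 - v) = 0" by (simp add: mult.assoc right_diff_distrib v(1))
    finally show ?thesis by simp
  qed
  have nX: "norm X \<le> t"
  proof -
    have "norm X = t * norm (1 - v)" by (simp add: X_def norm_cs_mult t0)
    also have "\<dots> \<le> t * 1" using projection_norm[OF projection_compl[OF pv]] t0 by (intro mult_left_mono) auto
    finally show ?thesis by simp
  qed
  have nY: "norm Y \<le> t"
  proof -
    have "norm Y \<le> norm v * norm e * norm v" by (simp add: Y_def norm_mult3)
    also have "\<dots> \<le> 1 * t * 1" using projection_norm[OF pv] ne t0 by (intro mult_mono) auto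
    finally show ?thesis by simp
  qed
  have f: "X + Y = cs (complex_of_real t) - v * a * v"
  proof -
    have "v * cs (complex_of_real t) * v = cs (complex_of_real t) * v" by (simp add: cs_comm[symmetric] mult.assoc v(1))
    thus ?thesis by (simp add: X_def Y_def e_def algebra_simps)
  qed
  have nf: "norm (cs (complex_of_real t) - v * a * v) \<le> t" using orth_norm[OF sX sY XY YX nX nY] f by simp
  have svav: "adj (v * a * v) = v * a * v" by (simp add: adj_mult sa v mult.assoc)
  have "z \<in> \<real> \<and> 0 \<le> Re z" if z: "z \<in> spectrum_el (v * a * v)" for z
  proof -
    have iz: "Im z = 0" by (rule real_spec[OF svav z])
    have eq: "(cs (complex_of_real t) - v * a * v) - cs (complex_of_real t - z) = - (v * a * v - cs z)"
      by (simp add: cs_diff)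
    have "\<not> invertible_el (v * a * v - cs z)" using z by (simp add: spectrum_cs)
    hence "\<not> invertible_el (- (v * a * v - cs z))" using inv_minus[of "- (v * a * v - cs z)"] by auto
    hence "complex_of_real t - z \<in> spectrum_el (cs (complex_of_real t) - v * a * v)"
      unfolding spectrum_cs eq .
    hence "cmod (complex_of_real t - z) \<le> t" using spec_bound nf order_trans by blast
    hence "\<bar>t - Re z\<bar> \<le> t" using iz by (simp add: cmod_def)
    thus "z \<in> \<real> \<and> 0 \<le> Re z" using iz by (auto simp: complex_is_Real_iff)
  qed
  thus ?thesis using svav by (simp add: positive_el_def)
qed

locale cov_at =
  fixes \<sigma> :: "'a::cstar_algebra \<Rightarrow> 'c::cstar_algebra" and u :: 'c and Vx :: "'a \<Rightarrow> 'a"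
  assumes hom: "unital_injective_star_hom \<sigma>"
    and pi: "partial_isometry u"
    and cov: "\<And>a. \<sigma> (Vx a) = u * \<sigma> a * adj u"
    and rng: "\<And>a. adj u * \<sigma> a * u \<in> range \<sigma>"
begin

lemma s_mult: "\<sigma> (a * b) = \<sigma> a * \<sigma> b" using hom by (simp add: unital_injective_star_hom_def)
lemma s_one: "\<sigma> 1 = 1" using hom by (simp add: unital_injective_star_hom_def)
lemma s_adj: "\<sigma> (adj a) = adj (\<sigma> a)" using hom by (simp add: unital_injective_star_hom_def)
lemma s_inj: "\<sigma> a = \<sigma> b \<Longrightarrow> a = b" using hom by (auto simp: unital_injective_star_hom_def inj_def)
lemma s_add: "\<sigma> (a + b) = \<sigma> a + \<sigma> b" using hom by (simp add: unital_injective_star_hom_def clinear_map_def)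
lemma s_scaleC: "\<sigma> (scaleC c a) = scaleC c (\<sigma> a)" using hom by (simp add: unital_injective_star_hom_def clinear_map_def)
lemma s_zero: "\<sigma> 0 = 0" using s_add[of 0 0] by simp
lemma s_minus: "\<sigma> (- a) = - \<sigma> a"
proof -
  have "\<sigma> a + \<sigma> (- a) = 0" using s_add[of a "-a"] s_zero by simp
  thus ?thesis by (rule minus_unique[symmetric])
qed
lemma s_diff: "\<sigma> (a - b) = \<sigma> a - \<sigma> b"
proof -
  have "\<sigma> (a + - b) = \<sigma> a + - \<sigma> b" by (simp only: s_add s_minus)
  thus ?thesis by simp
qed
lemma s_cs: "\<sigma> (cs c) = cs c" using s_scaleC[of c 1] by (simp add: cs_def s_one)

lemma uP: "u * (adj u * u) = u" by (rule pi_right[OF pi])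
lemma Qu: "(u * adj u) * u = u" by (rule pi_left[OF pi])
lemma uQ: "adj u * (u * adj u) = adj u" by (rule pi_adj_left[OF pi])
lemma Pu': "(adj u * u) * adj u = adj u" using uQ by (simp add: mult.assoc)
lemma P_proj: "projection_el (adj u * u)" by (rule pi_projection[OF pi])
lemma Q_proj: "projection_el (u * adj u)" by (rule pi_adj_projection[OF pi])

lemma s_v: "\<sigma> (Vx 1) = u * adj u" using cov[of 1] by (simp add: s_one)

lemma v_proj: "projection_el (Vx 1)"
proof -
  have "\<sigma> (Vx 1 * Vx 1) = \<sigma> (Vx 1)" using Q_proj by (simp add: s_mult s_v projection_el_def)
  moreover have "\<sigma> (adj (Vx 1)) = \<sigma> (Vx 1)" using Q_proj by (simp add: s_adj s_v projection_el_def)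
  ultimately show ?thesis by (auto simp: projection_el_def intro: s_inj)
qed

lemma H_unique:
  fixes Hx :: "'a \<Rightarrow> 'a"
  assumes hsa: "adj (Hx 1) = Hx 1"
    and HVH: "\<And>a. Hx (Vx (Hx a)) = Hx a"
    and HV: "\<And>b. Hx (Vx b) = Hx 1 * b * Hx 1"
    and VH: "\<And>a. Vx (Hx a) = Vx 1 * a * Vx 1"
  shows "\<sigma> (Hx a) = adj u * \<sigma> a * u"
proof -
  define P where "P = adj u * u"
  define h where "h = Hx 1"
  define k where "k = \<sigma> h"
  have ksa: "adj k = k" by (simp add: k_def h_def hsa flip: s_adj)
  have Pp: "P * P = P" "adj P = P" using P_proj by (auto simp: P_def projection_el_def)
  have E1: "P * \<sigma> (Hx c) * P = adj u * \<sigma> c * u" for c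
  proof -
    have "\<sigma> (Vx (Hx c)) = u * \<sigma> (Hx c) * adj u" by (rule cov)
    moreover have "\<sigma> (Vx (Hx c)) = (u * adj u) * \<sigma> c * (u * adj u)" by (simp add: VH s_mult s_v)
    ultimately have eq: "u * \<sigma> (Hx c) * adj u = (u * adj u) * \<sigma> c * (u * adj u)" by simp
    have "P * \<sigma> (Hx c) * P = adj u * (u * \<sigma> (Hx c) * adj u) * u" by (simp add: P_def mult.assoc)
    also have "\<dots> = adj u * ((u * adj u) * \<sigma> c * (u * adj u)) * u" by (simp only: eq)
    also have "\<dots> = (adj u * (u * adj u)) * \<sigma> c * ((u * adj u) * u)" by (simp add: mult.assoc)
    also have "\<dots> = adj u * \<sigma> c * u" by (simp add: uQ Qu)
    finally show ?thesis .
  qed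
  have E2: "P * (k * \<sigma> b * k) * P = P * \<sigma> b * P" for b
  proof -
    have "P * (k * \<sigma> b * k) * P = P * \<sigma> (Hx (Vx b)) * P" by (simp add: HV s_mult k_def h_def)
    also have "\<dots> = adj u * (u * \<sigma> b * adj u) * u" by (simp add: E1 cov)
    also have "\<dots> = P * \<sigma> b * P" by (simp add: P_def mult.assoc)
    finally show ?thesis .
  qed
  have PkP: "P * k * P = P" using E1[of 1] by (simp add: k_def h_def s_one P_def)
  have PkkP: "P * (k * k) * P = P" using E2[of 1] Pp by (simp add: s_one mult.assoc)
  define w where "w = (1 - P) * k * P"
  have PP1: "(1 - P) * (1 - P) = 1 - P" by (simp add: algebra_simps Pp)
  have "adj w * w = P * k * ((1 - P) * (1 - P)) * k * P"
    by (simp add: w_def adj_mult adj_diff ksa Pp mult.assoc)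
  also have "\<dots> = P * k * (1 - P) * k * P" by (simp only: PP1)
  also have "\<dots> = P * (k * k) * P - (P * k * P) * (k * P)"
    by (simp add: algebra_simps)
  also have "\<dots> = P - P * (k * P)" by (simp only: PkkP PkP)
  also have "\<dots> = 0" by (simp add: mult.assoc[symmetric] PkP)
  finally have aw: "adj w * w = 0" .
  hence w0: "w = 0" by (rule cstar_zero)
  have "k * P - P * k * P = w" by (simp add: w_def left_diff_distrib)
  hence kP: "k * P = P" using w0 PkP by simp
  have "adj (k * P) = P * k" by (simp add: adj_mult ksa Pp(2))
  hence Pk: "P * k = P" using kP Pp(2) by simp
  obtain p where p: "\<sigma> p = P" using rng[of 1] by (auto simp: s_one P_def)
  have hp: "h * p = p" by (rule s_inj) (simp add: s_mult p flip: k_def add: kP)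
  have ph: "p * h = p" by (rule s_inj) (simp add: s_mult p flip: k_def add: Pk)
  have Vp: "Vx (p * b * p) = Vx b" for b
  proof (rule s_inj)
    have "\<sigma> (Vx (p * b * p)) = (u * P) * \<sigma> b * (P * adj u)" by (simp add: cov s_mult p mult.assoc)
    also have "\<dots> = u * \<sigma> b * adj u" by (simp add: P_def uP Pu')
    finally show "\<sigma> (Vx (p * b * p)) = \<sigma> (Vx b)" by (simp add: cov)
  qed
  have hbh: "h * b * h = p * b * p" for b
  proof -
    have "h * b * h = Hx (Vx b)" by (simp add: HV h_def)
    also have "\<dots> = Hx (Vx (p * b * p))" by (simp add: Vp)
    also have "\<dots> = (h * p) * b * (p * h)" by (simp add: HV h_def mult.assoc)
    finally show ?thesis by (simp add: hp ph)
  qed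
  have "Hx a = h * Hx a * h" using HVH[of a] HV[of "Hx a"] by (simp add: h_def)
  also have "\<dots> = p * Hx a * p" by (rule hbh)
  finally have "\<sigma> (Hx a) = \<sigma> (p * Hx a * p)" by (rule arg_cong)
  also have "\<dots> = P * \<sigma> (Hx a) * P" by (simp only: s_mult p)
  also have "\<dots> = adj u * \<sigma> a * u" by (simp add: P_def E1[unfolded P_def])
  finally show ?thesis .
qed

end

definition Hdef :: "('a::cstar_algebra \<Rightarrow> 'c::cstar_algebra) \<Rightarrow> 'c \<Rightarrow> 'a \<Rightarrow> 'a" where
  "Hdef \<sigma> u a = inv \<sigma> (adj u * \<sigma> a * u)"

lemma corner_alg:
  fixes u A Y :: "'c::cstar_algebra"
  assumes z: "z \<noteq> 0"
    and uP: "u * (adj u * u) = u" and uQ: "adj u * (u * adj u) = adj u"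
    and Y1: "((u * adj u) * A * (u * adj u) - cs z) * Y = 1"
    and Y2: "Y * ((u * adj u) * A * (u * adj u) - cs z) = 1"
  shows "(adj u * A * u - cs z) * (adj u * Y * u - cs (inverse z) * (1 - adj u * u)) = 1"
    and "(adj u * Y * u - cs (inverse z) * (1 - adj u * u)) * (adj u * A * u - cs z) = 1"
proof -
  define Q where "Q = u * adj u"
  define P where "P = adj u * u"
  define X where "X = adj u * A * u"
  define W where "W = adj u * Y * u"
  define c where "c = (cs z :: 'c)"
  define d where "d = (cs (inverse z) :: 'c)"
  have cd: "c * d = 1" "d * c = 1" using z by (simp_all add: c_def d_def cs_inv cs_inv')
  have uQ': "adj u * Q = adj u" using uQ by (simp add: Q_def)
  have Qu: "Q * u = u" using uP by (simp add: Q_def mult.assoc)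
  have Pu: "P * adj u = adj u" using uQ by (simp add: P_def mult.assoc)
  have uP': "u * P = u" using uP by (simp add: P_def)
  have XP: "X * (1 - P) = 0"
  proof -
    have "X * P = adj u * A * (u * P)" by (simp add: X_def mult.assoc)
    thus ?thesis by (simp add: right_diff_distrib uP' X_def)
  qed
  have PX: "(1 - P) * X = 0"
  proof -
    have "P * X = (P * adj u) * A * u" by (simp add: X_def mult.assoc)
    thus ?thesis by (simp add: left_diff_distrib Pu X_def)
  qed
  have Y1': "Q * A * Q * Y = 1 + c * Y" using Y1 by (simp add: Q_def c_def left_diff_distrib algebra_simps)
  have Y2': "Y * (Q * A * Q) = 1 + Y * c" using Y2 by (simp add: Q_def c_def right_diff_distrib algebra_simps)
  have XW: "X * W = P + c * W"
  proof -
    have "X * W = adj u * A * Q * Y * u" by (simp add: X_def W_def Q_def mult.assoc)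
    also have "\<dots> = (adj u * Q) * A * Q * Y * u" by (simp only: uQ')
    also have "\<dots> = adj u * (Q * A * Q * Y) * u" by (simp only: mult.assoc)
    also have "\<dots> = adj u * (1 + c * Y) * u" by (simp only: Y1')
    also have "\<dots> = P + adj u * c * Y * u" by (simp add: P_def algebra_simps)
    also have "adj u * c = c * adj u" by (simp add: c_def cs_comm)
    finally show ?thesis by (simp add: W_def mult.assoc)
  qed
  have WX: "W * X = P + W * c"
  proof -
    have "W * X = adj u * Y * Q * A * u" by (simp add: X_def W_def Q_def mult.assoc)
    also have "\<dots> = adj u * Y * Q * A * (Q * u)" by (simp only: Qu)
    also have "\<dots> = adj u * (Y * (Q * A * Q)) * u" by (simp only: mult.assoc)
    also have "\<dots> = adj u * (1 + Y * c) * u" by (simp only: Y2')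
    also have "\<dots> = P + adj u * Y * (c * u)" by (simp add: P_def algebra_simps)
    also have "c * u = u * c" by (simp add: c_def cs_comm)
    finally show ?thesis by (simp add: W_def mult.assoc)
  qed
  have cW: "W * c = c * W" by (simp add: c_def cs_comm)
  have "(X - c) * (W - d * (1 - P)) = X * W - (X * d) * (1 - P) - c * W + (c * d) * (1 - P)"
    by (simp add: algebra_simps)
  also have "X * d = d * X" by (simp add: d_def cs_comm)
  also have "d * X * (1 - P) = 0" by (simp add: mult.assoc XP)
  finally have L: "(X - c) * (W - d * (1 - P)) = 1" by (simp add: XW cd)
  thus "(adj u * A * u - cs z) * (adj u * Y * u - cs (inverse z) * (1 - adj u * u)) = 1"
    by (simp only: X_def W_def c_def d_def P_def)
  have "(W - d * (1 - P)) * (X - c) = W * X - d * ((1 - P) * X) - W * c + d * ((1 - P) * c)"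
    by (simp add: algebra_simps)
  also have "d * ((1 - P) * X) = 0" by (simp add: PX)
  also have "(1 - P) * c = c * (1 - P)" by (simp add: c_def cs_comm)
  also have "d * (c * (1 - P)) = 1 - P" by (simp only: mult.assoc[symmetric] cd mult_1_left)
  finally have L2: "(W - d * (1 - P)) * (X - c) = 1" by (simp add: WX cW)
  thus "(adj u * Y * u - cs (inverse z) * (1 - adj u * u)) * (adj u * A * u - cs z) = 1"
    by (simp only: X_def W_def c_def d_def P_def)
qed

context cov_at
begin

abbreviation "H \<equiv> Hdef \<sigma> u"

lemma s_H: "\<sigma> (H a) = adj u * \<sigma> a * u"
  unfolding Hdef_def using rng[of a] by (rule f_inv_into_f)

lemma r1: "u * (adj u * (u * X)) = u * X" by (metis mult.assoc uP)
lemma r2: "adj u * (u * (adj u * X)) = adj u * X" by (metis mult.assoc uQ)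

lemmas sred = s_H cov s_mult s_one mult.assoc r1 r2 uP uQ

lemma VHV: "Vx (H (Vx a)) = Vx a" by (rule s_inj) (simp add: sred)
lemma HVH: "H (Vx (H a)) = H a" by (rule s_inj) (simp add: sred)
lemma HV: "H (Vx a) = H 1 * a * H 1" by (rule s_inj) (simp add: sred)
lemma VH: "Vx (H a) = Vx 1 * a * Vx 1" by (rule s_inj) (simp add: sred)
lemma V_mult_H: "a \<in> range H \<or> b \<in> range H \<Longrightarrow> Vx (a * b) = Vx a * Vx b"
  by (elim disjE; clarify; rule s_inj) (simp_all add: sred)
lemma H_mult_V: "a \<in> range Vx \<or> b \<in> range Vx \<Longrightarrow> H (a * b) = H a * H b"
  by (elim disjE; clarify; rule s_inj) (simp_all add: sred)

lemma H_add: "H (a + b) = H a + H b"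
  by (rule s_inj) (simp add: s_H s_add algebra_simps)

lemma H_scaleC: "H (scaleC c a) = scaleC c (H a)"
proof (rule s_inj)
  have "\<sigma> (H (scaleC c a)) = adj u * (cs c * \<sigma> a) * u" by (simp add: s_H s_scaleC) (simp add: scaleC_cs)
  also have "\<dots> = cs c * (adj u * \<sigma> a * u)" by (simp only: mult_cs_assoc mult.assoc)
  also have "\<dots> = \<sigma> (scaleC c (H a))" by (simp add: s_scaleC s_H) (simp add: scaleC_cs)
  finally show "\<sigma> (H (scaleC c a)) = \<sigma> (scaleC c (H a))" .
qed

lemma s_cs_c: "\<sigma> (cs c) = cs c" by (rule s_cs)

lemma corner_inv:
  assumes z: "z \<noteq> 0" and inv: "invertible_el (Vx 1 * a * Vx 1 - cs z)"
  shows "invertible_el (H a - cs z)"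
proof -
  obtain y where y1: "(Vx 1 * a * Vx 1 - cs z) * y = 1" and y2: "y * (Vx 1 * a * Vx 1 - cs z) = 1"
    using inv by (auto simp: invertible_el_def)
  have Y1: "((u * adj u) * \<sigma> a * (u * adj u) - cs z) * \<sigma> y = 1"
    using arg_cong[OF y1, of \<sigma>] by (simp add: s_mult s_diff s_cs s_v s_one)
  have Y2: "\<sigma> y * ((u * adj u) * \<sigma> a * (u * adj u) - cs z) = 1"
    using arg_cong[OF y2, of \<sigma>] by (simp add: s_mult s_diff s_cs s_v s_one)
  note ca = corner_alg[OF z uP uQ Y1 Y2]
  define g where "g = H y - cs (inverse z) * (1 - H 1)"
  have sg: "\<sigma> g = adj u * \<sigma> y * u - cs (inverse z) * (1 - adj u * u)"
    by (simp add: g_def s_diff s_mult s_cs s_one s_H)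
  have sa: "\<sigma> (H a - cs z) = adj u * \<sigma> a * u - cs z" by (simp add: s_diff s_cs s_H)
  have "(H a - cs z) * g = 1" by (rule s_inj) (simp add: s_mult sa sg ca s_one)
  moreover have "g * (H a - cs z) = 1" by (rule s_inj) (simp add: s_mult sa sg ca s_one)
  ultimately show ?thesis by (rule invertible_elI)
qed

lemma H_spec: "z \<in> spectrum_el (H a) \<Longrightarrow> z = 0 \<or> z \<in> spectrum_el (Vx 1 * a * Vx 1)"
  using corner_inv by (auto simp: spectrum_cs)

lemma H_adj: "adj (H a) = H (adj a)"
  by (rule s_inj) (simp add: s_adj s_H adj_mult mult.assoc adj_adj)

lemma H_positive: "positive_el a \<Longrightarrow> positive_el (H a)"
proof -
  assume pa: "positive_el a"
  have sa: "adj a = a" using pa by (simp add: positive_el_def)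
  have pv: "positive_el (Vx 1 * a * Vx 1)" by (rule compression_positive[OF pa v_proj])
  have "\<forall>z\<in>spectrum_el (H a). z \<in> \<real> \<and> 0 \<le> Re z"
  proof
    fix z assume "z \<in> spectrum_el (H a)"
    hence "z = 0 \<or> z \<in> spectrum_el (Vx 1 * a * Vx 1)" by (rule H_spec)
    thus "z \<in> \<real> \<and> 0 \<le> Re z" using pv by (auto simp: positive_el_def)
  qed
  thus ?thesis by (simp add: positive_el_def H_adj sa)
qed

lemma H_bounded: "norm (H a) \<le> norm a"
proof -
  define e where "e = adj (H a) * H a"
  define b where "b = adj a * Vx 1 * a"
  have eH: "e = H b"
    by (rule s_inj) (simp add: e_def b_def s_adj s_H s_mult s_v adj_mult mult.assoc adj_adj)
  have se: "adj e = e" by (simp add: e_def adj_mult adj_adj)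
  have vp: "projection_el (Vx 1)" by (rule v_proj)
  have nv: "norm (Vx 1) \<le> 1" by (rule projection_norm[OF vp])
  have nb: "norm (Vx 1 * b * Vx 1) \<le> norm a ^ 2"
  proof -
    have "norm (Vx 1 * b * Vx 1) \<le> norm (Vx 1) * norm b * norm (Vx 1)" by (rule norm_mult3)
    also have "\<dots> \<le> 1 * norm b * 1" using nv by (intro mult_mono) auto
    also have "norm b \<le> norm (adj a) * norm (Vx 1) * norm a" unfolding b_def by (rule norm_mult3)
    also have "\<dots> \<le> norm a * 1 * norm a" using nv by (intro mult_mono) (auto simp: norm_adj)
    finally show ?thesis by (simp add: power2_eq_square)
  qed
  have "norm e \<le> norm a ^ 2"
  proof (rule norm_le_spec[OF se])
    fix z assume "z \<in> spectrum_el e"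
    hence "z = 0 \<or> z \<in> spectrum_el (Vx 1 * b * Vx 1)" unfolding eH by (rule H_spec)
    thus "cmod z \<le> norm a ^ 2" using spec_bound nb by fastforce
  qed simp
  hence "norm (H a) ^ 2 \<le> norm a ^ 2" by (simp add: e_def norm_sq_adj)
  thus ?thesis by (rule power2_le_imp_le) simp
qed

lemma H_bpl: "bounded_positive_linear H"
  unfolding bounded_positive_linear_def clinear_map_def bounded_map_def
  using H_add H_scaleC H_positive H_bounded by (auto intro!: exI[of _ 1])

end

lemma second_gen:
  fixes V H :: "'g::linordered_ab_group_add \<Rightarrow> 'a::cstar_algebra \<Rightarrow> 'a"
    and \<sigma> :: "'a \<Rightarrow> 'd::cstar_algebra" and U :: "'g \<Rightarrow> 'd"
  assumes aH: "action H" and ci: "complete_interaction V H" and cov: "covariant_rep \<sigma> U V" and x: "x \<ge> 0"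
  shows "\<sigma> (H x a) = adj (U x) * \<sigma> a * U x"
proof -
  interpret cov_at \<sigma> "U x" "V x" using cov x by unfold_locales (auto simp: covariant_rep_def)
  have "bounded_positive_linear (H x)" using aH x by (simp add: action_def)
  hence "positive_el (H x 1)" unfolding bounded_positive_linear_def using positive_one by blast
  hence hsa: "adj (H x 1) = H x 1" by (simp add: positive_el_def)
  have int: "interaction V H" using ci by (simp add: complete_interaction_def)
  have "H x \<circ> V x \<circ> H x = H x" using int x by (simp add: interaction_def)
  hence HVH: "H x (V x (H x c)) = H x c" for c by (metis comp_apply)
  have HV: "H x (V x b) = H x 1 * b * H x 1" for b using ci x by (simp add: complete_interaction_def)
  have VH: "V x (H x c) = V x 1 * c * V x 1" for c using ci x by (simp add: complete_interaction_def)
  show ?thesis by (rule H_unique[OF hsa HVH HV VH])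
qed

theorem proposition4p2:
  fixes V :: "'g::linordered_ab_group_add \<Rightarrow> 'a::cstar_algebra \<Rightarrow> 'a"
    and \<sigma>0 :: "'a \<Rightarrow> 'c::cstar_algebra" and U0 :: "'g \<Rightarrow> 'c"
  assumes "action V"
    and "covariant_rep \<sigma>0 U0 V"
  shows "(\<exists>H. action H \<and> complete_interaction V H \<and>
           (\<forall>H'. action H' \<and> complete_interaction V H' \<longrightarrow> (\<forall>x\<ge>0. H' x = H x))) \<and>
         (\<forall>H. action H \<and> complete_interaction V H \<longrightarrow>
           (\<forall>(\<sigma> :: 'a \<Rightarrow> 'd::cstar_algebra) U. covariant_rep \<sigma> U V \<longrightarrow>
              (\<forall>x\<ge>0. \<forall>a. \<sigma> (V x a) = U x * \<sigma> a * adj (U x) \<and>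
                          \<sigma> (H x a) = adj (U x) * \<sigma> a * U x)))"
proof -
  note aV = assms(1) and cov0 = assms(2)
  have cov0': "unital_injective_star_hom \<sigma>0" "\<And>x y. x \<ge> 0 \<Longrightarrow> y \<ge> 0 \<Longrightarrow> U0 (x + y) = U0 x * U0 y"
    "\<And>x. x \<ge> 0 \<Longrightarrow> partial_isometry (U0 x)"
    "\<And>x a. x \<ge> 0 \<Longrightarrow> \<sigma>0 (V x a) = U0 x * \<sigma>0 a * adj (U0 x)"
    "\<And>x a. x \<ge> 0 \<Longrightarrow> adj (U0 x) * \<sigma>0 a * U0 x \<in> range \<sigma>0"
    using cov0 by (auto simp: covariant_rep_def)
  have CA: "cov_at \<sigma>0 (U0 x) (V x)" if "x \<ge> 0" for x
    using cov0' that by unfold_locales auto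
  define H0 where "H0 x = Hdef \<sigma>0 (U0 x)" for x
  have sH0: "\<sigma>0 (H0 x a) = adj (U0 x) * \<sigma>0 a * U0 x" if "x \<ge> 0" for x a
    unfolding H0_def using cov_at.s_H[OF CA[OF that]] .
  have inj0: "\<sigma>0 a = \<sigma>0 b \<Longrightarrow> a = b" for a b using cov_at.s_inj[OF CA[of 0]] by simp
  have s0mult: "\<sigma>0 (a * b) = \<sigma>0 a * \<sigma>0 b" for a b using cov_at.s_mult[OF CA[of 0]] by simp
  have s0one: "\<sigma>0 1 = 1" using cov_at.s_one[OF CA[of 0]] by simp
  have V0: "V 0 = id" using aV by (simp add: action_def)
  have U00: "U0 0 = 1"
  proof -
    define w where "w = U0 0"
    have ww: "w * w = w" using cov0'(2)[of 0 0] by (simp add: w_def)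
    have "\<sigma>0 (V 0 1) = w * \<sigma>0 1 * adj w" using cov0'(4)[of 0 1] by (simp add: w_def)
    hence wa: "w * adj w = 1" using V0 s0one by simp
    have "w = w * (w * adj w)" using wa by simp
    also have "\<dots> = (w * w) * adj w" by (simp add: mult.assoc)
    also have "\<dots> = 1" using ww wa by simp
    finally show ?thesis by (simp add: w_def)
  qed
  have act0: "action H0"
    unfolding action_def
  proof (intro conjI allI impI)
    fix x :: 'g assume "x \<ge> 0"
    thus "bounded_positive_linear (H0 x)" unfolding H0_def by (rule cov_at.H_bpl[OF CA])
  next
    show "H0 0 = id"
    proof
      fix a show "H0 0 a = id a" by (rule inj0) (simp add: sH0 U00)
    qed
  next
    fix x y :: 'g assume x: "x \<ge> 0" and y: "y \<ge> 0"
    show "H0 x \<circ> H0 y = H0 (x + y)"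
    proof
      fix a
      have U: "U0 (x + y) = U0 y * U0 x" using cov0'(2)[OF y x] by (simp add: add.commute)
      show "(H0 x \<circ> H0 y) a = H0 (x + y) a"
        by (rule inj0) (simp add: sH0 x y U adj_mult mult.assoc)
    qed
  qed
  have ptw: "\<forall>x\<ge>0. V x \<circ> H0 x \<circ> V x = V x \<and> H0 x \<circ> V x \<circ> H0 x = H0 x \<and>
     (\<forall>a b. a \<in> range (H0 x) \<or> b \<in> range (H0 x) \<longrightarrow> V x (a * b) = V x a * V x b) \<and>
     (\<forall>a b. a \<in> range (V x) \<or> b \<in> range (V x) \<longrightarrow> H0 x (a * b) = H0 x a * H0 x b)"
  proof (intro allI impI)
    fix x :: 'g assume x: "x \<ge> 0"
    interpret cov_at \<sigma>0 "U0 x" "V x" by (rule CA[OF x])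
    have 1: "V x \<circ> H0 x \<circ> V x = V x" by (rule ext) (simp add: H0_def VHV)
    have 2: "H0 x \<circ> V x \<circ> H0 x = H0 x" by (rule ext) (simp add: H0_def HVH)
    have 3: "\<forall>a b. a \<in> range (H0 x) \<or> b \<in> range (H0 x) \<longrightarrow> V x (a * b) = V x a * V x b"
      using V_mult_H by (simp add: H0_def)
    have 4: "\<forall>a b. a \<in> range (V x) \<or> b \<in> range (V x) \<longrightarrow> H0 x (a * b) = H0 x a * H0 x b"
      using H_mult_V by (simp add: H0_def)
    show "V x \<circ> H0 x \<circ> V x = V x \<and> H0 x \<circ> V x \<circ> H0 x = H0 x \<and>
     (\<forall>a b. a \<in> range (H0 x) \<or> b \<in> range (H0 x) \<longrightarrow> V x (a * b) = V x a * V x b) \<and>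
     (\<forall>a b. a \<in> range (V x) \<or> b \<in> range (V x) \<longrightarrow> H0 x (a * b) = H0 x a * H0 x b)"
      using 1 2 3 4 by blast
  qed
  have cpl: "\<forall>x\<ge>0. \<forall>a. H0 x (V x a) = H0 x 1 * a * H0 x 1 \<and> V x (H0 x a) = V x 1 * a * V x 1"
  proof (intro allI impI)
    fix x :: 'g and a assume x: "x \<ge> 0"
    interpret cov_at \<sigma>0 "U0 x" "V x" by (rule CA[OF x])
    show "H0 x (V x a) = H0 x 1 * a * H0 x 1 \<and> V x (H0 x a) = V x 1 * a * V x 1"
      by (simp add: H0_def HV VH)
  qed
  have comm: "\<forall>x\<ge>0. \<forall>y\<ge>0. H0 y 1 * V x 1 = V x 1 * H0 y 1"
  proof (intro allI impI)
    fix x y :: 'g assume x: "x \<ge> 0" and y: "y \<ge> 0"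
    have pc: "(adj (U0 y) * U0 y) * (U0 x * adj (U0 x)) = (U0 x * adj (U0 x)) * (adj (U0 y) * U0 y)"
    proof (rule pi_product_commute)
      show "partial_isometry (U0 y)" "partial_isometry (U0 x)" using cov0'(3) x y by auto
      have "U0 (y + x) = U0 y * U0 x" using cov0'(2)[OF y x] .
      moreover have "y + x \<ge> 0" using x y by simp
      ultimately show "partial_isometry (U0 y * U0 x)" using cov0'(3) by metis
    qed
    show "H0 y 1 * V x 1 = V x 1 * H0 y 1"
      by (rule inj0) (simp add: s0mult sH0 y cov0'(4)[OF x] s0one pc)
  qed
  have ci0: "complete_interaction V H0"
    unfolding complete_interaction_def interaction_def using aV act0 ptw cpl comm by blast
  have part2: "\<forall>H. action H \<and> complete_interaction V H \<longrightarrow>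
           (\<forall>(\<sigma> :: 'a \<Rightarrow> 'd::cstar_algebra) U. covariant_rep \<sigma> U V \<longrightarrow>
              (\<forall>x\<ge>0. \<forall>a. \<sigma> (V x a) = U x * \<sigma> a * adj (U x) \<and>
                          \<sigma> (H x a) = adj (U x) * \<sigma> a * U x))"
    by (auto simp: covariant_rep_def intro: second_gen)
  have uniq: "\<forall>H'. action H' \<and> complete_interaction V H' \<longrightarrow> (\<forall>x\<ge>0. H' x = H0 x)"
  proof (intro allI impI)
    fix H' :: "'g \<Rightarrow> 'a \<Rightarrow> 'a" and x :: 'g
    assume H': "action H' \<and> complete_interaction V H'" and x: "x \<ge> 0"
    show "H' x = H0 x"
    proof
      fix a
      show "H' x a = H0 x a"
        by (rule inj0) (simp add: second_gen[OF H'[THEN conjunct1] H'[THEN conjunct2] cov0 x] sH0[OF x])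
    qed
  qed
  show ?thesis using act0 ci0 uniq part2 by blast
qed

end
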